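(* For every term $M$ of $\ell\Lambda_\infty^{4S}$ there is a normal form $N$, itself a term of $\ell\Lambda_\infty^{4S}$, such that $M\Rightarrow N$.
   Context: Preterms: possibly infinite trees generated by $M ::= x \mid MN \mid \lambda x.M \mid \lambda^{\downarrow}x.M \mid \lambda^{\uparrow}x.M \mid \downarrow M \mid \uparrow M$ ($\downarrow M$ inductive box, $\uparrow M$ coinductive box); substitution is capture-avoiding. Patterns: $x,\downarrow x,\uparrow x,\#x,\dagger x$; environments: finite sets of patterns, each variable in at most one; $\Theta,\Xi,\Psi,\Phi$ linear environments with marked versions $\#\Theta$ etc.; $\Upsilon,\Pi$ environments with only patterns $y$, $\downarrow y$; commas are disjoint unions. A term of $\ell\Lambda_\infty^{4S}$ is a preterm $M$ with $\Gamma\vdash M$ derivable for some $\Gamma$ by: (vl) $\#\Theta,\uparrow\Xi,\dagger\Psi,x\vdash x$; (vd) $\#\Theta,\uparrow\Xi,\dagger\Psi,\#x\vdash x$; (va) $\#\Theta,\uparrow\Xi,\dagger\Psi,\dagger x\vdash x$; (a) from $\Upsilon,\#\Theta,\uparrow\Xi,\dagger\Psi\vdash M$ and $\Pi,\#\Theta,\uparrow\Xi,\dagger\Psi\vdash N$ infer $\Upsilon,\Pi,\#\Theta,\uparrow\Xi,\dagger\Psi\vdash MN$; (ll) $\Gamma,x\vdash M$ gives $\Gamma\vdash\lambda x.M$; (li)$_1$ $\Gamma,\#x\vdash M$ gives $\Gamma\vdash\lambda^\downarrow x.M$; (li)$_2$ $\Gamma,\downarrow x\vdash M$ gives $\Gamma\vdash\lambda^\downarrow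 x.M$; (lc) $\Gamma,\uparrow x\vdash M$ gives $\Gamma\vdash\lambda^\uparrow x.M$; (mi) from $\Xi,\uparrow\Psi,\dagger\Phi\vdash M$ infer $\#\Theta,\downarrow\Xi,\uparrow\Psi,\dagger\Phi\vdash\downarrow M$; (mc) from $\dagger\Xi,\dagger\Psi\vdash M$ infer $\#\Theta,\uparrow\Xi,\dagger\Psi\vdash\uparrow M$; (mc) coinductive, others inductive (every infinite branch of a derivation contains infinitely many (mc)). Basic reduction: $(\lambda x.M)N\mapsto M[N/x]$, $(\lambda^\downarrow x.M)(\downarrow N)\mapsto M[N/x]$, $(\lambda^\uparrow x.M)(\uparrow N)\mapsto M[N/x]$; $M\to N$ iff $M=C[L]$, $N=C[P]$, $L\mapsto P$ for a one-hole context $C$. A normal form is a preterm $N$ with no $N'$ such that $N\to N'$. Infinitary reduction $\Rightarrow$ and the auxiliary relation $\leadsto$ are given by the mixed formal system: (coinductive rule) if $M\to^*N$ and $N\leadsto L$ then $M\Rightarrow L$; (inductive rules) $x\leadsto x$; if $M\leadsto N$ and $L\leadsto P$ then $ML\leadsto NP$; if $M\leadsto N$ then $\lambda x.M\leadsto\lambda x.N$, $\lambda^\downarrow x.M\leadsto\lambda^\downarrow x.N$, $\lambda^\uparrow x.M\leadsto\lambda^\uparrow x.N$ and $\downarrow M\leadsto\downarrow N$; if $M\Rightarrow N$ then $\uparrow M\leadsto\uparrow N$. A judgment holds iff it is the root of a possibly infinite derivation tree in which every infinite branch uses the coinductive rule infinitely often. *)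

theory Defs
  imports Main
begin

text \<open>Preterms of the infinitary linear lambda calculus, possibly infinite,
  represented with de Bruijn indices (so capture-avoiding substitution is built in).
  Lam = \<lambda>x, LamI = \<lambda>\<down>x, LamC = \<lambda>\<up>x, BoxI = \<down>M (inductive box),
  BoxC = \<up>M (coinductive box).\<close>

codatatype trm =
    Var nat
  | App trm trm
  | Lam trm
  | LamI trm
  | LamC trm
  | BoxI trm
  | BoxC trm

primcorec lift :: "nat \<Rightarrow> nat \<Rightarrow> trm \<Rightarrow> trm" where
  "lift c n t = (case t of
      Var i \<Rightarrow> Var (if i < c then i else i + n)
    | App a b \<Rightarrow> App (lift c n a) (lift c n b)
    | Lam a \<Rightarrow> Lam (lift (Suc c) n a)
    | LamI a \<Rightarrow> LamI (lift (Suc c) n a)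
    | LamC a \<Rightarrow> LamC (lift (Suc c) n a)
    | BoxI a \<Rightarrow> BoxI (lift c n a)
    | BoxC a \<Rightarrow> BoxC (lift c n a))"

text \<open>substR k N M P : P is M with index k replaced by N (capture avoiding, de Bruijn).
  Defined coinductively since terms may be infinite; it is functional.\<close>
coinductive substR :: "nat \<Rightarrow> trm \<Rightarrow> trm \<Rightarrow> trm \<Rightarrow> bool" where
  s_var: "substR k N (Var i)
            (if i = k then lift 0 k N else if k < i then Var (i - 1) else Var i)"
| s_app: "substR k N M1 P1 \<Longrightarrow> substR k N M2 P2 \<Longrightarrow> substR k N (App M1 M2) (App P1 P2)"
| s_lam: "substR (Suc k) N M P \<Longrightarrow> substR k N (Lam M) (Lam P)"
| s_lamI: "substR (Suc k) N M P \<Longrightarrow> substR k N (LamI M) (LamI P)"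
| s_lamC: "substR (Suc k) N M P \<Longrightarrow> substR k N (LamC M) (LamC P)"
| s_boxI: "substR k N M P \<Longrightarrow> substR k N (BoxI M) (BoxI P)"
| s_boxC: "substR k N M P \<Longrightarrow> substR k N (BoxC M) (BoxC P)"

inductive basic :: "trm \<Rightarrow> trm \<Rightarrow> bool" where
  b_lin: "substR 0 N M P \<Longrightarrow> basic (App (Lam M) N) P"
| b_ind: "substR 0 N M P \<Longrightarrow> basic (App (LamI M) (BoxI N)) P"
| b_coi: "substR 0 N M P \<Longrightarrow> basic (App (LamC M) (BoxC N)) P"

inductive step :: "trm \<Rightarrow> trm \<Rightarrow> bool" where
  st_basic: "basic M N \<Longrightarrow> step M N"
| st_appL: "step M M' \<Longrightarrow> step (App M N) (App M' N)"
| st_appR: "step N N' \<Longrightarrow> step (App M N) (App M N')"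
| st_lam: "step M M' \<Longrightarrow> step (Lam M) (Lam M')"
| st_lamI: "step M M' \<Longrightarrow> step (LamI M) (LamI M')"
| st_lamC: "step M M' \<Longrightarrow> step (LamC M) (LamC M')"
| st_boxI: "step M M' \<Longrightarrow> step (BoxI M) (BoxI M')"
| st_boxC: "step M M' \<Longrightarrow> step (BoxC M) (BoxC M')"

definition normal_form :: "trm \<Rightarrow> bool" where
  "normal_form N \<longleftrightarrow> \<not> (\<exists>N'. step N N')"

text \<open>Infinitary reduction: the auxiliary relation (inductive rules), parametrised by
  the relation used in the premise of the \<up>-rule, then the coinductive rule.\<close>
inductive leadsI :: "(trm \<Rightarrow> trm \<Rightarrow> bool) \<Rightarrow> trm \<Rightarrow> trm \<Rightarrow> bool" for R where
  l_var: "leadsI R (Var x) (Var x)"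
| l_app: "leadsI R M N \<Longrightarrow> leadsI R L P \<Longrightarrow> leadsI R (App M L) (App N P)"
| l_lam: "leadsI R M N \<Longrightarrow> leadsI R (Lam M) (Lam N)"
| l_lamI: "leadsI R M N \<Longrightarrow> leadsI R (LamI M) (LamI N)"
| l_lamC: "leadsI R M N \<Longrightarrow> leadsI R (LamC M) (LamC N)"
| l_boxI: "leadsI R M N \<Longrightarrow> leadsI R (BoxI M) (BoxI N)"
| l_boxC: "R M N \<Longrightarrow> leadsI R (BoxC M) (BoxC N)"

lemma leadsI_mono_aux:
  "leadsI R M N \<Longrightarrow> (\<And>a b. R a b \<longrightarrow> S a b) \<Longrightarrow> leadsI S M N"
  by (induction rule: leadsI.induct) (auto intro: leadsI.intros)

lemma leadsI_mono[mono]: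
  "(\<And>a b. R a b \<longrightarrow> S a b) \<Longrightarrow> leadsI R M N \<longrightarrow> leadsI S M N"
  using leadsI_mono_aux by blast

coinductive infred :: "trm \<Rightarrow> trm \<Rightarrow> bool" where
  "step\<^sup>*\<^sup>* M N \<Longrightarrow> leadsI infred N L \<Longrightarrow> infred M L"

text \<open>Patterns: PL = x, PI = \<down>x, PC = \<up>x, PH = #x, PD = \<dagger>x.
  An environment assigns to each (de Bruijn) variable at most one pattern.\<close>
datatype pat = PL | PI | PC | PH | PD

type_synonym env = "nat \<Rightarrow> pat option"

definition push :: "pat \<Rightarrow> env \<Rightarrow> env" where
  "push p \<Gamma> = (\<lambda>i. case i of 0 \<Rightarrow> Some p | Suc j \<Rightarrow> \<Gamma> j)"

definition app_split :: "env \<Rightarrow> env \<Rightarrow> env \<Rightarrow> bool" where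
  "app_split \<Gamma> \<Gamma>1 \<Gamma>2 \<longleftrightarrow> (\<forall>y.
     (\<Gamma> y \<in> {Some PL, Some PI} \<longrightarrow>
        (\<Gamma>1 y = \<Gamma> y \<and> \<Gamma>2 y = None) \<or> (\<Gamma>1 y = None \<and> \<Gamma>2 y = \<Gamma> y)) \<and>
     (\<Gamma> y \<notin> {Some PL, Some PI} \<longrightarrow> \<Gamma>1 y = \<Gamma> y \<and> \<Gamma>2 y = \<Gamma> y))"

definition mi_env :: "env \<Rightarrow> env" where
  "mi_env \<Gamma> = (\<lambda>y. case \<Gamma> y of Some PH \<Rightarrow> None | Some PI \<Rightarrow> Some PL | v \<Rightarrow> v)"

definition mc_env :: "env \<Rightarrow> env" where
  "mc_env \<Gamma> = (\<lambda>y. case \<Gamma> y of Some PH \<Rightarrow> None | Some PC \<Rightarrow> Some PD | v \<Rightarrow> v)"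

inductive tyI :: "(env \<Rightarrow> trm \<Rightarrow> bool) \<Rightarrow> env \<Rightarrow> trm \<Rightarrow> bool" for R where
  t_var: "\<Gamma> x \<in> {Some PL, Some PH, Some PD} \<Longrightarrow>
          (\<forall>y. y \<noteq> x \<longrightarrow> \<Gamma> y \<in> {None, Some PH, Some PC, Some PD}) \<Longrightarrow>
          tyI R \<Gamma> (Var x)"
| t_app: "app_split \<Gamma> \<Gamma>1 \<Gamma>2 \<Longrightarrow> tyI R \<Gamma>1 M \<Longrightarrow> tyI R \<Gamma>2 N \<Longrightarrow> tyI R \<Gamma> (App M N)"
| t_ll: "tyI R (push PL \<Gamma>) M \<Longrightarrow> tyI R \<Gamma> (Lam M)"
| t_li1: "tyI R (push PH \<Gamma>) M \<Longrightarrow> tyI R \<Gamma> (LamI M)"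
| t_li2: "tyI R (push PI \<Gamma>) M \<Longrightarrow> tyI R \<Gamma> (LamI M)"
| t_lc: "tyI R (push PC \<Gamma>) M \<Longrightarrow> tyI R \<Gamma> (LamC M)"
| t_mi: "(\<forall>y. \<Gamma> y \<noteq> Some PL) \<Longrightarrow> tyI R (mi_env \<Gamma>) M \<Longrightarrow> tyI R \<Gamma> (BoxI M)"
| t_mc: "(\<forall>y. \<Gamma> y \<in> {None, Some PH, Some PC, Some PD}) \<Longrightarrow> R (mc_env \<Gamma>) M \<Longrightarrow>
         tyI R \<Gamma> (BoxC M)"

lemma tyI_mono_aux:
  "tyI R \<Gamma> M \<Longrightarrow> (\<And>a b. R a b \<longrightarrow> S a b) \<Longrightarrow> tyI S \<Gamma> M"
  by (induction rule: tyI.induct) (auto intro: tyI.intros)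

lemma tyI_mono[mono]:
  "(\<And>a b. R a b \<longrightarrow> S a b) \<Longrightarrow> tyI R \<Gamma> M \<longrightarrow> tyI S \<Gamma> M"
  using tyI_mono_aux by blast

text \<open>(mc) is the only coinductive rule: greatest fixed point over it, least over the rest.\<close>
coinductive ty :: "env \<Rightarrow> trm \<Rightarrow> bool" where
  "tyI ty \<Gamma> M \<Longrightarrow> ty \<Gamma> M"

definition is_term :: "trm \<Rightarrow> bool" where
  "is_term M \<longleftrightarrow> (\<exists>\<Gamma>. finite (dom \<Gamma>) \<and> ty \<Gamma> M)"

end

theory Submission
  imports Defs "HOL-Library.Multiset"
begin

lemma lift_simps[simp]:
  "lift c n (Var i) = Var (if i < c then i else i + n)"
  "lift c n (App a b) = App (lift c n a) (lift c n b)"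
  "lift c n (Lam a) = Lam (lift (Suc c) n a)"
  "lift c n (LamI a) = LamI (lift (Suc c) n a)"
  "lift c n (LamC a) = LamC (lift (Suc c) n a)"
  "lift c n (BoxI a) = BoxI (lift c n a)"
  "lift c n (BoxC a) = BoxC (lift c n a)"
  by (subst lift.code; simp)+

definition env_le :: "env \<Rightarrow> env \<Rightarrow> bool" where
  "env_le G G' \<longleftrightarrow> (\<forall>y. G' y = G y \<or> (G y \<in> {None, Some PL} \<and> G' y = Some PH)
       \<or> (G y = None \<and> G' y \<in> {Some PC, Some PD}))"

lemma env_le_push: "env_le G G' \<Longrightarrow> env_le (push p G) (push p G')"
  unfolding env_le_def push_def by (auto split: nat.split)

lemma opt_cases: "v = None \<or> v = Some PL \<or> v = Some PI \<or> v = Some PC \<or> v = Some PH \<or> v = Some PD"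
  by (cases v) (auto intro: pat.exhaust)

lemma optE: "(v = None \<Longrightarrow> P) \<Longrightarrow> (v = Some PL \<Longrightarrow> P) \<Longrightarrow> (v = Some PI \<Longrightarrow> P)
  \<Longrightarrow> (v = Some PC \<Longrightarrow> P) \<Longrightarrow> (v = Some PH \<Longrightarrow> P) \<Longrightarrow> (v = Some PD \<Longrightarrow> P) \<Longrightarrow> P"
  using opt_cases[of v] by blast

lemma weak_I:
  assumes "tyI R G M" "env_le G G'"
  shows "tyI (\<lambda>D M. \<exists>D0. R D0 M \<and> env_le D0 D) G' M"
  using assms
proof (induction arbitrary: G' rule: tyI.induct)
  case (t_var G x)
  show ?case
  proof (rule tyI.t_var)
    have "G' x = G x \<or> (G x \<in> {None, Some PL} \<and> G' x = Some PH)
       \<or> (G x = None \<and> G' x \<in> {Some PC, Some PD})" using t_var(3) unfolding env_le_def by blast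
    then show "G' x \<in> {Some PL, Some PH, Some PD}" using t_var(1) by (cases "G x" rule: optE; cases "G' x" rule: optE) (auto simp add: mi_env_def mc_env_def)
    show "\<forall>y. y \<noteq> x \<longrightarrow> G' y \<in> {None, Some PH, Some PC, Some PD}"
    proof (intro allI impI)
      fix y assume "y \<noteq> x"
      have "G' y = G y \<or> (G y \<in> {None, Some PL} \<and> G' y = Some PH)
       \<or> (G y = None \<and> G' y \<in> {Some PC, Some PD})" using t_var(3) unfolding env_le_def by blast
      then show "G' y \<in> {None, Some PH, Some PC, Some PD}" using t_var(2)[rule_format, OF \<open>y \<noteq> x\<close>] by (cases "G y" rule: optE; cases "G' y" rule: optE) (auto simp add: mi_env_def mc_env_def)
    qed
  qed
next
  case (t_app G G1 G2 M N)
  define G1' where "G1' = (\<lambda>y. if G' y = G y then G1 y else G' y)"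
  define G2' where "G2' = (\<lambda>y. if G' y = G y then G2 y else G' y)"
  have s: "app_split G' G1' G2'" unfolding app_split_def
  proof
    fix y
    have a: "(G y \<in> {Some PL, Some PI} \<longrightarrow>
        (G1 y = G y \<and> G2 y = None) \<or> (G1 y = None \<and> G2 y = G y)) \<and>
     (G y \<notin> {Some PL, Some PI} \<longrightarrow> G1 y = G y \<and> G2 y = G y)"
      using t_app(1) unfolding app_split_def by blast
    have b: "G' y = G y \<or> (G y \<in> {None, Some PL} \<and> G' y = Some PH)
       \<or> (G y = None \<and> G' y \<in> {Some PC, Some PD})" using t_app(6) unfolding env_le_def by blast
    show "(G' y \<in> {Some PL, Some PI} \<longrightarrow>
        (G1' y = G' y \<and> G2' y = None) \<or> (G1' y = None \<and> G2' y = G' y)) \<and>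
     (G' y \<notin> {Some PL, Some PI} \<longrightarrow> G1' y = G' y \<and> G2' y = G' y)"
      using a b unfolding G1'_def G2'_def by (cases "G y" rule: optE; cases "G' y" rule: optE) (auto simp add: mi_env_def mc_env_def)
  qed
  have "env_le G1 G1' \<and> env_le G2 G2'" unfolding env_le_def
  proof (intro conjI allI)
    fix y
    have a: "(G y \<in> {Some PL, Some PI} \<longrightarrow>
        (G1 y = G y \<and> G2 y = None) \<or> (G1 y = None \<and> G2 y = G y)) \<and>
     (G y \<notin> {Some PL, Some PI} \<longrightarrow> G1 y = G y \<and> G2 y = G y)"
      using t_app(1) unfolding app_split_def by blast
    have b: "G' y = G y \<or> (G y \<in> {None, Some PL} \<and> G' y = Some PH)
       \<or> (G y = None \<and> G' y \<in> {Some PC, Some PD})" using t_app(6) unfolding env_le_def by blast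
    show "G1' y = G1 y \<or> (G1 y \<in> {None, Some PL} \<and> G1' y = Some PH)
       \<or> (G1 y = None \<and> G1' y \<in> {Some PC, Some PD})"
      using a b unfolding G1'_def by (cases "G y" rule: optE; cases "G' y" rule: optE) (auto simp add: mi_env_def mc_env_def)
    show "G2' y = G2 y \<or> (G2 y \<in> {None, Some PL} \<and> G2' y = Some PH)
       \<or> (G2 y = None \<and> G2' y \<in> {Some PC, Some PD})"
      using a b unfolding G2'_def by (cases "G y" rule: optE; cases "G' y" rule: optE) (auto simp add: mi_env_def mc_env_def)
  qed
  then show ?case using s t_app by (blast intro: tyI.t_app)
next
  case (t_ll G M) then show ?case by (blast intro: tyI.t_ll env_le_push)
next
  case (t_li1 G M) then show ?case by (blast intro: tyI.t_li1 env_le_push)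
next
  case (t_li2 G M) then show ?case by (blast intro: tyI.t_li2 env_le_push)
next
  case (t_lc G M) then show ?case by (blast intro: tyI.t_lc env_le_push)
next
  case (t_mi G M)
  have "env_le (mi_env G) (mi_env G')"
    unfolding env_le_def
  proof
    fix y
    have b: "G' y = G y \<or> (G y \<in> {None, Some PL} \<and> G' y = Some PH)
       \<or> (G y = None \<and> G' y \<in> {Some PC, Some PD})" using t_mi(4) unfolding env_le_def by blast
    show "mi_env G' y = mi_env G y \<or> (mi_env G y \<in> {None, Some PL} \<and> mi_env G' y = Some PH)
       \<or> (mi_env G y = None \<and> mi_env G' y \<in> {Some PC, Some PD})"
      using b t_mi(1)[rule_format, of y] by (cases "G y" rule: optE; cases "G' y" rule: optE) (auto simp add: mi_env_def mc_env_def)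
  qed
  moreover have "\<forall>y. G' y \<noteq> Some PL"
  proof
    fix y have "G' y = G y \<or> (G y \<in> {None, Some PL} \<and> G' y = Some PH)
       \<or> (G y = None \<and> G' y \<in> {Some PC, Some PD})" using t_mi(4) unfolding env_le_def by blast
    then show "G' y \<noteq> Some PL" using t_mi(1)[rule_format, of y] by (cases "G y" rule: optE; cases "G' y" rule: optE) (auto simp add: mi_env_def mc_env_def)
  qed
  ultimately show ?case using t_mi by (blast intro: tyI.t_mi)
next
  case (t_mc G M)
  have "env_le (mc_env G) (mc_env G')"
    unfolding env_le_def
  proof
    fix y have "G' y = G y \<or> (G y \<in> {None, Some PL} \<and> G' y = Some PH)
       \<or> (G y = None \<and> G' y \<in> {Some PC, Some PD})" using t_mc(3) unfolding env_le_def by blast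
    then show "mc_env G' y = mc_env G y \<or> (mc_env G y \<in> {None, Some PL} \<and> mc_env G' y = Some PH)
       \<or> (mc_env G y = None \<and> mc_env G' y \<in> {Some PC, Some PD})"
      using t_mc(1)[rule_format, of y] unfolding mc_env_def by (cases "G y" rule: optE; cases "G' y" rule: optE) (auto simp add: mi_env_def mc_env_def)
  qed
  moreover have "\<forall>y. G' y \<in> {None, Some PH, Some PC, Some PD}"
  proof
    fix y have "G' y = G y \<or> (G y \<in> {None, Some PL} \<and> G' y = Some PH)
       \<or> (G y = None \<and> G' y \<in> {Some PC, Some PD})" using t_mc(3) unfolding env_le_def by blast
    then show "G' y \<in> {None, Some PH, Some PC, Some PD}" using t_mc(1)[rule_format, of y] by (cases "G y" rule: optE; cases "G' y" rule: optE) (auto simp add: mi_env_def mc_env_def)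
  qed
  ultimately show ?case using t_mc by (blast intro: tyI.t_mc)
qed

lemma ty_coind:
  assumes "X G M" and "\<And>G M. X G M \<Longrightarrow> tyI (\<lambda>G M. X G M \<or> ty G M) G M"
  shows "ty G M"
  using assms by (coinduction arbitrary: G M rule: ty.coinduct) auto

lemma ty_tyI: "ty G M \<Longrightarrow> tyI ty G M" by (cases rule: ty.cases) auto
lemma tyI_ty: "tyI ty G M \<Longrightarrow> ty G M" by (rule ty.intros)

lemma weak: assumes "ty G M" "env_le G G'" shows "ty G' M"
proof -
  have "\<exists>G. ty G M \<and> env_le G G'" using assms by blast
  then show ?thesis
  proof (rule ty_coind)
    fix D N assume "\<exists>G. ty G N \<and> env_le G D"
    then obtain G where "ty G N" "env_le G D" by blast
    show "tyI (\<lambda>D N. (\<exists>G. ty G N \<and> env_le G D) \<or> ty D N) D N"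
      by (rule tyI_mono_aux[OF weak_I[OF ty_tyI[OF \<open>ty G N\<close>] \<open>env_le G D\<close>]]) blast
  qed
qed

definition shenv :: "nat \<Rightarrow> nat \<Rightarrow> env \<Rightarrow> env" where
  "shenv c n D = (\<lambda>i. if i < c then D i else if i < c + n then None else D (i - n))"

lemma shenv_push: "shenv (Suc c) n (push p D) = push p (shenv c n D)"
proof (rule ext)
  fix i show "shenv (Suc c) n (push p D) i = push p (shenv c n D) i"
  proof (cases i)
    case 0 then show ?thesis by (simp add: shenv_def push_def)
  next
    case (Suc j) then show ?thesis by (auto simp: shenv_def push_def Suc_diff_le)
  qed
qed

lemma shenv_mi: "shenv c n (mi_env D) = mi_env (shenv c n D)"
  unfolding shenv_def mi_env_def by auto

lemma shenv_mc: "shenv c n (mc_env D) = mc_env (shenv c n D)"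
  unfolding shenv_def mc_env_def by auto

lemma lift_I:
  assumes "tyI R D M"
  shows "tyI (\<lambda>T L. \<exists>c n D N. R D N \<and> T = shenv c n D \<and> L = lift c n N) (shenv c n D) (lift c n M)"
  using assms
proof (induction arbitrary: c rule: tyI.induct)
  case (t_var G x)
  show ?case
  unfolding lift_simps(1)
  proof (rule tyI.t_var)
    show "shenv c n G (if x < c then x else x + n) \<in> {Some PL, Some PH, Some PD}"
      using t_var(1) by (simp add: shenv_def)
    show "\<forall>y. y \<noteq> (if x < c then x else x + n) \<longrightarrow> shenv c n G y \<in> {None, Some PH, Some PC, Some PD}"
    proof (intro allI impI)
      fix y assume y: "y \<noteq> (if x < c then x else x + n)"
      show "shenv c n G y \<in> {None, Some PH, Some PC, Some PD}"
      proof (cases "y < c")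
        case True
        then have "y \<noteq> x" using y by (auto split: if_splits)
        then show ?thesis using t_var(2)[rule_format, of y] True by (simp add: shenv_def)
      next
        case False
        show ?thesis
        proof (cases "y < c + n")
          case True then show ?thesis using False by (simp add: shenv_def)
        next
          case F2: False
          then have "y - n \<noteq> x" using y False by (auto split: if_splits)
          then show ?thesis using t_var(2) False F2 by (simp add: shenv_def)
        qed
      qed
    qed
  qed
next
  case (t_app G G1 G2 M N)
  have "app_split (shenv c n G) (shenv c n G1) (shenv c n G2)"
    using t_app(1) unfolding app_split_def shenv_def by auto
  then show ?case using t_app by (auto intro: tyI.t_app)
next
  case (t_ll G M) then show ?case by (auto intro!: tyI.t_ll simp: shenv_push[symmetric])
next
  case (t_li1 G M) then show ?case by (auto intro!: tyI.t_li1 simp: shenv_push[symmetric])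
next
  case (t_li2 G M) then show ?case by (auto intro!: tyI.t_li2 simp: shenv_push[symmetric])
next
  case (t_lc G M) then show ?case by (auto intro!: tyI.t_lc simp: shenv_push[symmetric])
next
  case (t_mi G M)
  have "\<forall>y. shenv c n G y \<noteq> Some PL" using t_mi(1) by (simp add: shenv_def)
  then show ?case using t_mi by (auto intro!: tyI.t_mi simp: shenv_mi[symmetric])
next
  case (t_mc G M)
  have "\<forall>y. shenv c n G y \<in> {None, Some PH, Some PC, Some PD}" using t_mc(1) by (simp add: shenv_def)
  then show ?case unfolding lift_simps
  proof (rule tyI.t_mc)
    show "\<exists>c' n' D N. R D N \<and> mc_env (shenv c n G) = shenv c' n' D \<and> lift c n M = lift c' n' N"
      by (intro exI[of _ c] exI[of _ n] exI[of _ "mc_env G"] exI[of _ M]) (simp add: shenv_mc t_mc(2))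
  qed
qed

lemma lift_ty: assumes "ty D M" shows "ty (shenv c n D) (lift c n M)"
proof (rule ty_coind[where X="\<lambda>T L. \<exists>c n D N. ty D N \<and> T = shenv c n D \<and> L = lift c n N"])
    show "\<exists>c' n' D' N. ty D' N \<and> shenv c n D = shenv c' n' D' \<and> lift c n M = lift c' n' N"
      using assms by blast
  next
    fix T L assume "\<exists>c n D N. ty D N \<and> T = shenv c n D \<and> L = lift c n N"
    then obtain c n D N where h: "ty D N" "T = shenv c n D" "L = lift c n N" by blast
    show "tyI (\<lambda>T L. (\<exists>c n D N. ty D N \<and> T = shenv c n D \<and> L = lift c n N) \<or> ty T L) T L"
      unfolding h(2,3) by (rule tyI_mono_aux[OF lift_I[OF ty_tyI[OF h(1)]]]) blast
qed

definition mrg :: "pat option \<Rightarrow> pat option \<Rightarrow> pat option" where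
  "mrg a b = (if a = None then b else a)"

definition senv :: "nat \<Rightarrow> env \<Rightarrow> env \<Rightarrow> env" where
  "senv k G D = (\<lambda>i. if i < k then G i else mrg (G (Suc i)) (D (i - k)))"

definition cpt :: "pat option \<Rightarrow> pat option \<Rightarrow> bool" where
  "cpt g d \<longleftrightarrow> g = None \<or> d = None \<or> (g = d \<and> d \<in> {Some PH, Some PC, Some PD})"

definition compat :: "nat \<Rightarrow> env \<Rightarrow> env \<Rightarrow> bool" where
  "compat k G D \<longleftrightarrow> (\<forall>j. cpt (G (k + Suc j)) (D j))"

definition nonlin :: "env \<Rightarrow> bool" where
  "nonlin D \<longleftrightarrow> (\<forall>y. D y \<in> {None, Some PH, Some PC, Some PD})"

definition cond :: "pat option \<Rightarrow> env \<Rightarrow> env \<Rightarrow> bool" where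
  "cond p DN D = (case p of None \<Rightarrow> nonlin D | Some PL \<Rightarrow> DN = D
     | Some PH \<Rightarrow> DN = D \<and> nonlin D
     | Some PI \<Rightarrow> DN = mi_env D \<and> (\<forall>y. D y \<noteq> Some PL)
     | Some PC \<Rightarrow> DN = mc_env D \<and> nonlin D
     | Some PD \<Rightarrow> DN = D \<and> (\<forall>y. D y \<in> {None, Some PD}))"

definition nl :: "env \<Rightarrow> env" where
  "nl D = (\<lambda>y. if D y \<in> {Some PL, Some PI} then None else D y)"

lemma senv_push: "senv (Suc k) (push p G) D = push p (senv k G D)"
proof (rule ext)
  fix i show "senv (Suc k) (push p G) D i = push p (senv k G D) i"
    by (cases i) (auto simp: senv_def push_def)
qed

lemma compat_push: "compat (Suc k) (push p G) D = compat k G D"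
  unfolding compat_def push_def by simp

lemma push_0: "push p G 0 = Some p"
  unfolding push_def by simp

lemma push_Suc: "push p G (Suc k) = G k"
  unfolding push_def by simp

definition mipt :: "pat option \<Rightarrow> pat option" where
  "mipt v = (case v of Some PH \<Rightarrow> None | Some PI \<Rightarrow> Some PL | v \<Rightarrow> v)"
definition mcpt :: "pat option \<Rightarrow> pat option" where
  "mcpt v = (case v of Some PH \<Rightarrow> None | Some PC \<Rightarrow> Some PD | v \<Rightarrow> v)"

lemma mi_env_pt: "mi_env G y = mipt (G y)" unfolding mi_env_def mipt_def by simp
lemma mc_env_pt: "mc_env G y = mcpt (G y)" unfolding mc_env_def mcpt_def by simp

lemma mrg_mi: "cpt g d \<Longrightarrow> mrg (mipt g) (mipt d) = mipt (mrg g d)"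
  by (cases g rule: optE; cases d rule: optE) (auto simp: cpt_def mrg_def mipt_def)
lemma mrg_mc: "cpt g d \<Longrightarrow> mrg (mcpt g) (mcpt d) = mcpt (mrg g d)"
  by (cases g rule: optE; cases d rule: optE) (auto simp: cpt_def mrg_def mcpt_def)
lemma cpt_mi: "cpt g d \<Longrightarrow> cpt (mipt g) (mipt d)"
  by (cases g rule: optE; cases d rule: optE) (auto simp: cpt_def mipt_def)
lemma cpt_mc: "cpt g d \<Longrightarrow> cpt (mcpt g) (mcpt d)"
  by (cases g rule: optE; cases d rule: optE) (auto simp: cpt_def mcpt_def)

lemma senv_mi: "compat k G D \<Longrightarrow> senv k (mi_env G) (mi_env D) = mi_env (senv k G D)"
proof (rule ext)
  fix i assume c: "compat k G D"
  show "senv k (mi_env G) (mi_env D) i = mi_env (senv k G D) i"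
  proof (cases "i < k")
    case True then show ?thesis by (simp add: senv_def mi_env_pt)
  next
    case False
    then have "cpt (G (Suc i)) (D (i - k))" using c unfolding compat_def
      by (metis Suc_diff_Suc add_Suc_right add_diff_inverse_nat not_less_eq)
    then show ?thesis using False by (simp add: senv_def mi_env_pt mrg_mi)
  qed
qed

lemma senv_mc: "compat k G D \<Longrightarrow> senv k (mc_env G) (mc_env D) = mc_env (senv k G D)"
proof (rule ext)
  fix i assume c: "compat k G D"
  show "senv k (mc_env G) (mc_env D) i = mc_env (senv k G D) i"
  proof (cases "i < k")
    case True then show ?thesis by (simp add: senv_def mc_env_pt)
  next
    case False
    then have "cpt (G (Suc i)) (D (i - k))" using c unfolding compat_def
      by (metis Suc_diff_Suc add_Suc_right add_diff_inverse_nat not_less_eq)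
    then show ?thesis using False by (simp add: senv_def mc_env_pt mrg_mc)
  qed
qed

lemma compat_mi: "compat k G D \<Longrightarrow> compat k (mi_env G) (mi_env D)"
  unfolding compat_def mi_env_pt using cpt_mi by blast
lemma compat_mc: "compat k G D \<Longrightarrow> compat k (mc_env G) (mc_env D)"
  unfolding compat_def mc_env_pt using cpt_mc by blast

lemma compat_at: "compat k G D \<Longrightarrow> \<not> i < k \<Longrightarrow> cpt (G (Suc i)) (D (i - k))"
  unfolding compat_def by (metis Suc_diff_Suc add_Suc_right add_diff_inverse_nat not_less_eq)

definition asp :: "pat option \<Rightarrow> pat option \<Rightarrow> pat option \<Rightarrow> bool" where
  "asp g g1 g2 \<longleftrightarrow> (g \<in> {Some PL, Some PI} \<longrightarrow> (g1 = g \<and> g2 = None) \<or> (g1 = None \<and> g2 = g)) \<and>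
     (g \<notin> {Some PL, Some PI} \<longrightarrow> g1 = g \<and> g2 = g)"

lemma app_split_pt: "app_split G G1 G2 \<longleftrightarrow> (\<forall>y. asp (G y) (G1 y) (G2 y))"
  unfolding app_split_def asp_def by blast

definition nlpt :: "pat option \<Rightarrow> pat option" where
  "nlpt d = (if d \<in> {Some PL, Some PI} then None else d)"

lemma nl_pt: "nl D y = nlpt (D y)" unfolding nl_def nlpt_def by simp

lemma asp_E: "asp g g1 g2 \<Longrightarrow> (g \<in> {Some PL, Some PI} \<Longrightarrow> g1 = g \<Longrightarrow> g2 = None \<Longrightarrow> P)
  \<Longrightarrow> (g \<in> {Some PL, Some PI} \<Longrightarrow> g1 = None \<Longrightarrow> g2 = g \<Longrightarrow> P)
  \<Longrightarrow> (g \<notin> {Some PL, Some PI} \<Longrightarrow> g1 = g \<Longrightarrow> g2 = g \<Longrightarrow> P) \<Longrightarrow> P"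
  unfolding asp_def by blast

lemma asp_lin1: "asp g g1 g2 \<Longrightarrow> cpt g d \<Longrightarrow> asp (mrg g d) (mrg g1 d) (mrg g2 (nlpt d))"
  by (erule asp_E; cases g rule: optE; cases d rule: optE) (auto simp: asp_def cpt_def mrg_def nlpt_def)
lemma asp_lin2: "asp g g1 g2 \<Longrightarrow> cpt g d \<Longrightarrow> asp (mrg g d) (mrg g1 (nlpt d)) (mrg g2 d)"
  by (erule asp_E; cases g rule: optE; cases d rule: optE) (auto simp: asp_def cpt_def mrg_def nlpt_def)
lemma asp_nl: "asp g g1 g2 \<Longrightarrow> cpt g d \<Longrightarrow> d \<in> {None, Some PH, Some PC, Some PD} \<Longrightarrow> asp (mrg g d) (mrg g1 d) (mrg g2 d)"
  by (erule asp_E; cases g rule: optE; cases d rule: optE) (auto simp: asp_def cpt_def mrg_def nlpt_def)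
lemma cpt_asp1: "asp g g1 g2 \<Longrightarrow> cpt g d \<Longrightarrow> cpt g1 d"
  by (erule asp_E; cases g rule: optE; cases d rule: optE) (auto simp: asp_def cpt_def mrg_def nlpt_def)
lemma cpt_asp2: "asp g g1 g2 \<Longrightarrow> cpt g d \<Longrightarrow> cpt g2 d"
  by (erule asp_E; cases g rule: optE; cases d rule: optE) (auto simp: asp_def cpt_def mrg_def nlpt_def)
lemma cpt_nl: "cpt g d \<Longrightarrow> cpt g (nlpt d)"
  by (auto simp: cpt_def nlpt_def)

lemma nonlin_nl: "nonlin (nl D)"
  unfolding nonlin_def nl_def
proof
  fix y show "(if D y \<in> {Some PL, Some PI} then None else D y) \<in> {None, Some PH, Some PC, Some PD}"
    by (cases "D y" rule: optE) auto
qed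

lemma split_senv:
  assumes sp: "app_split G G1 G2" and c: "compat k G D"
    and m: "(G1 k = G k \<and> D1 = D \<and> D2 = nl D) \<or> (G2 k = G k \<and> D1 = nl D \<and> D2 = D) \<or> (nonlin D \<and> D1 = D \<and> D2 = D)"
  shows "app_split (senv k G D) (senv k G1 D1) (senv k G2 D2)"
  unfolding app_split_pt
proof
  fix i
  show "asp (senv k G D i) (senv k G1 D1 i) (senv k G2 D2 i)"
  proof (cases "i < k")
    case True then show ?thesis using sp by (simp add: senv_def app_split_pt)
  next
    case False
    have a: "asp (G (Suc i)) (G1 (Suc i)) (G2 (Suc i))" using sp by (simp add: app_split_pt)
    have cc: "cpt (G (Suc i)) (D (i - k))" using compat_at[OF c False] .
    from m show ?thesis
    proof (elim disjE conjE)
      assume "D1 = D" "D2 = nl D"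
      then show ?thesis using asp_lin1[OF a cc] False by (simp add: senv_def nl_pt)
    next
      assume "D1 = nl D" "D2 = D"
      then show ?thesis using asp_lin2[OF a cc] False by (simp add: senv_def nl_pt)
    next
      assume "nonlin D" "D1 = D" "D2 = D"
      then show ?thesis using asp_nl[OF a cc] False by (simp add: senv_def nonlin_def)
    qed
  qed
qed

lemma compat_split1: "app_split G G1 G2 \<Longrightarrow> compat k G D \<Longrightarrow> compat k G1 D"
  unfolding compat_def app_split_pt using cpt_asp1 by blast
lemma compat_split2: "app_split G G1 G2 \<Longrightarrow> compat k G D \<Longrightarrow> compat k G2 D"
  unfolding compat_def app_split_pt using cpt_asp2 by blast
lemma compat_nl: "compat k G D \<Longrightarrow> compat k G (nl D)"
  unfolding compat_def nl_pt using cpt_nl by blast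

lemma sR_Var: "substR k N (Var x) P \<Longrightarrow> P = (if x = k then lift 0 k N else if k < x then Var (x - 1) else Var x)"
  by (cases rule: substR.cases) auto
lemma sR_App: "substR k N (App a b) P \<Longrightarrow> \<exists>P1 P2. P = App P1 P2 \<and> substR k N a P1 \<and> substR k N b P2"
  by (cases rule: substR.cases) auto
lemma sR_Lam: "substR k N (Lam a) P \<Longrightarrow> \<exists>P1. P = Lam P1 \<and> substR (Suc k) N a P1"
  by (cases rule: substR.cases) auto
lemma sR_LamI: "substR k N (LamI a) P \<Longrightarrow> \<exists>P1. P = LamI P1 \<and> substR (Suc k) N a P1"
  by (cases rule: substR.cases) auto
lemma sR_LamC: "substR k N (LamC a) P \<Longrightarrow> \<exists>P1. P = LamC P1 \<and> substR (Suc k) N a P1"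
  by (cases rule: substR.cases) auto
lemma sR_BoxI: "substR k N (BoxI a) P \<Longrightarrow> \<exists>P1. P = BoxI P1 \<and> substR k N a P1"
  by (cases rule: substR.cases) auto
lemma sR_BoxC: "substR k N (BoxC a) P \<Longrightarrow> \<exists>P1. P = BoxC P1 \<and> substR k N a P1"
  by (cases rule: substR.cases) auto

lemma pd_nonlin: "\<forall>y. D y \<in> {None, Some PD} \<Longrightarrow> nonlin D"
  unfolding nonlin_def
proof
  fix y assume "\<forall>y. D y \<in> {None, Some PD}"
  then have "D y \<in> {None, Some PD}" by blast
  then show "D y \<in> {None, Some PH, Some PC, Some PD}" by blast
qed

lemma nonlin_pt: "nonlin D \<Longrightarrow> D y \<in> {None, Some PH, Some PC, Some PD}"
  unfolding nonlin_def by blast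

lemma cond_nonlin: "cond p DN D \<Longrightarrow> p \<notin> {Some PL, Some PI} \<Longrightarrow> nonlin D"
  by (cases p rule: optE) (auto simp: cond_def pd_nonlin)

lemma cond_noPL: assumes "cond p DN D" "p \<noteq> Some PL" shows "D y \<noteq> Some PL"
proof (cases "p = Some PI")
  case True then show ?thesis using assms by (simp add: cond_def)
next
  case False
  then have "nonlin D" using assms cond_nonlin by blast
  from nonlin_pt[OF this, of y] show ?thesis by auto
qed

lemma nonlin_mi: "nonlin D \<Longrightarrow> nonlin (mi_env D)"
  unfolding nonlin_def mi_env_pt
proof
  fix y assume "\<forall>y. D y \<in> {None, Some PH, Some PC, Some PD}"
  then have "D y \<in> {None, Some PH, Some PC, Some PD}" by blast
  then show "mipt (D y) \<in> {None, Some PH, Some PC, Some PD}" unfolding mipt_def by auto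
qed

lemma nonlin_mc: "nonlin D \<Longrightarrow> \<forall>y. mc_env D y \<in> {None, Some PD}"
  unfolding nonlin_def mc_env_pt
proof
  fix y assume "\<forall>y. D y \<in> {None, Some PH, Some PC, Some PD}"
  then have "D y \<in> {None, Some PH, Some PC, Some PD}" by blast
  then show "mcpt (D y) \<in> {None, Some PD}" unfolding mcpt_def by auto
qed

lemma nonlin_mcn: "nonlin D \<Longrightarrow> nonlin (mc_env D)"
  using nonlin_mc unfolding nonlin_def by blast

lemma mc_mi: "nonlin D \<Longrightarrow> mc_env (mi_env D) = mc_env D"
proof (rule ext)
  fix y assume "nonlin D"
  then have "D y \<in> {None, Some PH, Some PC, Some PD}" unfolding nonlin_def by blast
  then show "mc_env (mi_env D) y = mc_env D y" unfolding mc_env_pt mi_env_pt mipt_def mcpt_def by auto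
qed

lemma pd_mi: "\<forall>y. D y \<in> {None, Some PD} \<Longrightarrow> mi_env D = D"
proof (rule ext)
  fix y assume "\<forall>y. D y \<in> {None, Some PD}"
  then have "D y \<in> {None, Some PD}" by blast
  then show "mi_env D y = D y" unfolding mi_env_def by auto
qed
lemma pd_mc: "\<forall>y. D y \<in> {None, Some PD} \<Longrightarrow> mc_env D = D"
proof (rule ext)
  fix y assume "\<forall>y. D y \<in> {None, Some PD}"
  then have "D y \<in> {None, Some PD}" by blast
  then show "mc_env D y = D y" unfolding mc_env_def by auto
qed

lemma cond_mi: assumes "p \<noteq> Some PL" "cond p DN D" shows "cond (mipt p) DN (mi_env D)"
proof (cases p rule: optE)
  case 1 then show ?thesis using assms by (auto simp: cond_def mipt_def nonlin_mi)
next
  case 2 then show ?thesis using assms by auto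
next
  case 3 then show ?thesis using assms by (auto simp: cond_def mipt_def)
next
  case 4 then show ?thesis using assms by (auto simp: cond_def mipt_def mc_mi nonlin_mi)
next
  case 5 then show ?thesis using assms by (auto simp: cond_def mipt_def nonlin_mi)
next
  case 6 then show ?thesis using assms by (auto simp: cond_def mipt_def pd_mi)
qed

lemma cond_mc: assumes "p \<in> {None, Some PH, Some PC, Some PD}" "cond p DN D" shows "cond (mcpt p) DN (mc_env D)"
proof (cases p rule: optE)
  case 1 then show ?thesis using assms by (auto simp: cond_def mcpt_def nonlin_mcn)
next
  case 2 then show ?thesis using assms by auto
next
  case 3 then show ?thesis using assms by auto
next
  case 4 then show ?thesis using assms nonlin_mc[of D] by (simp add: cond_def mcpt_def)
next
  case 5 then show ?thesis using assms by (auto simp: cond_def mcpt_def nonlin_mcn)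
next
  case 6 then show ?thesis using assms by (auto simp: cond_def mcpt_def pd_mc)
qed

lemma env_le_var:
  assumes "\<forall>y. y \<noteq> k \<longrightarrow> G y \<in> {None, Some PH, Some PC, Some PD}" "compat k G D"
  shows "env_le (shenv 0 k D) (senv k G D)"
  unfolding env_le_def
proof
  fix i
  show "senv k G D i = shenv 0 k D i \<or> (shenv 0 k D i \<in> {None, Some PL} \<and> senv k G D i = Some PH)
       \<or> (shenv 0 k D i = None \<and> senv k G D i \<in> {Some PC, Some PD})"
  proof (cases "i < k")
    case True
    then have "G i \<in> {None, Some PH, Some PC, Some PD}" using assms(1) by simp
    then show ?thesis using True by (auto simp: senv_def shenv_def)
  next
    case False
    then have "G (Suc i) \<in> {None, Some PH, Some PC, Some PD}" using assms(1) by simp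
    moreover have "cpt (G (Suc i)) (D (i - k))" using compat_at[OF assms(2) False] .
    ultimately show ?thesis using False by (auto simp: senv_def shenv_def cpt_def mrg_def)
  qed
qed

definition SX :: "env \<Rightarrow> trm \<Rightarrow> bool" where
  "SX T P \<longleftrightarrow> (\<exists>G M k N DN D. ty G M \<and> substR k N M P \<and> cond (G k) DN D \<and>
      (G k \<noteq> None \<longrightarrow> ty DN N) \<and> compat k G D \<and> T = senv k G D)"

lemma mrg_noPL: "g \<noteq> Some PL \<Longrightarrow> d \<noteq> Some PL \<Longrightarrow> mrg g d \<noteq> Some PL"
  by (simp add: mrg_def)

lemma mrg_nonlin: "g \<in> {None, Some PH, Some PC, Some PD} \<Longrightarrow> d \<in> {None, Some PH, Some PC, Some PD} \<Longrightarrow>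
   mrg g d \<in> {None, Some PH, Some PC, Some PD}"
  by (simp add: mrg_def)

lemma subst_I:
  assumes "tyI ty G M" "substR k N M P" "cond (G k) DN D" "G k \<noteq> None \<longrightarrow> ty DN N" "compat k G D"
  shows "tyI (\<lambda>T P. SX T P \<or> ty T P) (senv k G D) P"
  using assms
proof (induction arbitrary: k P D rule: tyI.induct)
  case (t_var G x)
  note P = sR_Var[OF t_var(3)]
  show ?case
  proof (cases "x = k")
    case True
    then have gk: "G k \<in> {Some PL, Some PH, Some PD}" using t_var(1) by simp
    then have "DN = D" using t_var(4) by (auto simp: cond_def)
    moreover have "ty DN N" using t_var(5) gk by auto
    ultimately have "ty (shenv 0 k D) (lift 0 k N)" using lift_ty by blast
    moreover have "env_le (shenv 0 k D) (senv k G D)"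
      using env_le_var t_var(2,6) True by blast
    ultimately have "ty (senv k G D) P" using weak P True by auto
    then show ?thesis by (rule tyI_mono_aux[OF ty_tyI]) blast
  next
    case False
    then have gk: "G k \<in> {None, Some PH, Some PC, Some PD}" using t_var(2) by auto
    then have nD: "nonlin D" using t_var(4) cond_nonlin by auto
    define x' where "x' = (if k < x then x - 1 else x)"
    have P': "P = Var x'" using P False by (simp add: x'_def)
    show ?thesis unfolding P'
    proof (rule tyI.t_var)
      show "senv k G D x' \<in> {Some PL, Some PH, Some PD}"
      proof (cases "k < x")
        case True
        then show ?thesis using t_var(1) by (auto simp: x'_def senv_def mrg_def)
      next
        case F: False
        then show ?thesis using t_var(1) False by (auto simp: x'_def senv_def)
      qed
      show "\<forall>y. y \<noteq> x' \<longrightarrow> senv k G D y \<in> {None, Some PH, Some PC, Some PD}"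
      proof (intro allI impI)
        fix y assume y: "y \<noteq> x'"
        show "senv k G D y \<in> {None, Some PH, Some PC, Some PD}"
        proof (cases "y < k")
          case True
          then have "y \<noteq> x" using y False by (auto simp: x'_def)
          then show ?thesis using t_var(2) True by (simp add: senv_def)
        next
          case F: False
          then have "Suc y \<noteq> x" using y False by (auto simp: x'_def)
          then have "G (Suc y) \<in> {None, Some PH, Some PC, Some PD}" using t_var(2) by simp
          from mrg_nonlin[OF this nonlin_pt[OF nD, of "y - k"]] show ?thesis using F by (simp add: senv_def)
        qed
      qed
    qed
  qed
next
  case (t_app G G1 G2 M1 M2)
  obtain P1 P2 where P: "P = App P1 P2" "substR k N M1 P1" "substR k N M2 P2"
    using sR_App[OF t_app(6)] by blast
  have a: "asp (G k) (G1 k) (G2 k)" using t_app(1) by (simp add: app_split_pt)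
  have c1: "compat k G1 D" "compat k G2 D"
    using compat_split1 compat_split2 t_app(1,9) by blast+
  show ?case
  proof (cases "G k \<in> {Some PL, Some PI}")
    case True
    from a show ?thesis
    proof (rule asp_E)
      assume g: "G1 k = G k" "G2 k = None"
      have h1: "tyI (\<lambda>T P. SX T P \<or> ty T P) (senv k G1 D) P1"
        using t_app.IH(1)[OF P(2)] g t_app(7,8) c1 by simp
      have h2: "tyI (\<lambda>T P. SX T P \<or> ty T P) (senv k G2 (nl D)) P2"
        using t_app.IH(2)[OF P(3)] g c1 compat_nl nonlin_nl by (simp add: cond_def)
      have "app_split (senv k G D) (senv k G1 D) (senv k G2 (nl D))"
        using split_senv[OF t_app(1,9)] g by blast
      then show ?thesis using h1 h2 P(1) by (blast intro: tyI.t_app)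
    next
      assume g: "G1 k = None" "G2 k = G k"
      have h2: "tyI (\<lambda>T P. SX T P \<or> ty T P) (senv k G2 D) P2"
        using t_app.IH(2)[OF P(3)] g t_app(7,8) c1 by simp
      have h1: "tyI (\<lambda>T P. SX T P \<or> ty T P) (senv k G1 (nl D)) P1"
        using t_app.IH(1)[OF P(2)] g c1 compat_nl nonlin_nl by (simp add: cond_def)
      have "app_split (senv k G D) (senv k G1 (nl D)) (senv k G2 D)"
        using split_senv[OF t_app(1,9)] g by blast
      then show ?thesis using h1 h2 P(1) by (blast intro: tyI.t_app)
    next
      assume "G k \<notin> {Some PL, Some PI}" with True show ?thesis by blast
    qed
  next
    case False
    then have g: "G1 k = G k" "G2 k = G k" using a by (auto simp: asp_def)
    have nD: "nonlin D" using cond_nonlin t_app(7) False by blast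
    have h1: "tyI (\<lambda>T P. SX T P \<or> ty T P) (senv k G1 D) P1"
      using t_app.IH(1)[OF P(2)] g t_app(7,8) c1 by simp
    have h2: "tyI (\<lambda>T P. SX T P \<or> ty T P) (senv k G2 D) P2"
      using t_app.IH(2)[OF P(3)] g t_app(7,8) c1 by simp
    have "app_split (senv k G D) (senv k G1 D) (senv k G2 D)"
      using split_senv[OF t_app(1,9)] nD by blast
    then show ?thesis using h1 h2 P(1) by (blast intro: tyI.t_app)
  qed
next
  case (t_ll G M)
  obtain P1 where P: "P = Lam P1" "substR (Suc k) N M P1" using sR_Lam[OF t_ll(3)] by blast
  have "tyI (\<lambda>T P. SX T P \<or> ty T P) (senv (Suc k) (push PL G) D) P1"
    using t_ll.IH[OF P(2)] t_ll(4,5,6) by (simp add: push_Suc compat_push)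
  then show ?case unfolding P senv_push by (rule tyI.t_ll)
next
  case (t_li1 G M)
  obtain P1 where P: "P = LamI P1" "substR (Suc k) N M P1" using sR_LamI[OF t_li1(3)] by blast
  have "tyI (\<lambda>T P. SX T P \<or> ty T P) (senv (Suc k) (push PH G) D) P1"
    using t_li1.IH[OF P(2)] t_li1(4,5,6) by (simp add: push_Suc compat_push)
  then show ?case unfolding P senv_push by (rule tyI.t_li1)
next
  case (t_li2 G M)
  obtain P1 where P: "P = LamI P1" "substR (Suc k) N M P1" using sR_LamI[OF t_li2(3)] by blast
  have "tyI (\<lambda>T P. SX T P \<or> ty T P) (senv (Suc k) (push PI G) D) P1"
    using t_li2.IH[OF P(2)] t_li2(4,5,6) by (simp add: push_Suc compat_push)
  then show ?case unfolding P senv_push by (rule tyI.t_li2)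
next
  case (t_lc G M)
  obtain P1 where P: "P = LamC P1" "substR (Suc k) N M P1" using sR_LamC[OF t_lc(3)] by blast
  have "tyI (\<lambda>T P. SX T P \<or> ty T P) (senv (Suc k) (push PC G) D) P1"
    using t_lc.IH[OF P(2)] t_lc(4,5,6) by (simp add: push_Suc compat_push)
  then show ?case unfolding P senv_push by (rule tyI.t_lc)
next
  case (t_mi G M)
  obtain P1 where P: "P = BoxI P1" "substR k N M P1" using sR_BoxI[OF t_mi(4)] by blast
  have nPL: "G k \<noteq> Some PL" using t_mi(1) by blast
  have "cond (mipt (G k)) DN (mi_env D)" using cond_mi[OF nPL t_mi(5)] .
  then have "cond (mi_env G k) DN (mi_env D)" by (simp add: mi_env_pt)
  moreover have "mi_env G k \<noteq> None \<longrightarrow> ty DN N" using t_mi(6) by (auto simp: mi_env_def)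
  moreover have "compat k (mi_env G) (mi_env D)" using compat_mi[OF t_mi(7)] .
  ultimately have "tyI (\<lambda>T P. SX T P \<or> ty T P) (senv k (mi_env G) (mi_env D)) P1"
    using t_mi.IH[OF P(2)] by blast
  then have h: "tyI (\<lambda>T P. SX T P \<or> ty T P) (mi_env (senv k G D)) P1"
    using senv_mi[OF t_mi(7)] by simp
  have "\<forall>y. senv k G D y \<noteq> Some PL"
  proof
    fix y
    show "senv k G D y \<noteq> Some PL"
      using t_mi(1) cond_noPL[OF t_mi(5) nPL] by (simp add: senv_def mrg_noPL)
  qed
  then show ?case unfolding P(1) using h by (rule tyI.t_mi)
next
  case (t_mc G M)
  obtain P1 where P: "P = BoxC P1" "substR k N M P1" using sR_BoxC[OF t_mc(3)] by blast
  have gk: "G k \<in> {None, Some PH, Some PC, Some PD}" using t_mc(1) by blast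
  have nD: "nonlin D" using cond_nonlin[OF t_mc(4)] gk by auto
  have "\<forall>y. senv k G D y \<in> {None, Some PH, Some PC, Some PD}"
  proof
    fix y
    have "G (Suc y) \<in> {None, Some PH, Some PC, Some PD}" "G y \<in> {None, Some PH, Some PC, Some PD}"
      using t_mc(1) by blast+
    then show "senv k G D y \<in> {None, Some PH, Some PC, Some PD}"
      using mrg_nonlin[OF _ nonlin_pt[OF nD, of "y - k"]] by (simp add: senv_def)
  qed
  moreover have "SX (mc_env (senv k G D)) P1"
    unfolding SX_def
  proof (intro exI conjI)
    show "ty (mc_env G) M" by (rule t_mc(2))
    show "substR k N M P1" by (rule P(2))
    show "cond (mc_env G k) DN (mc_env D)" using cond_mc[OF gk t_mc(4)] by (simp add: mc_env_pt)
    show "mc_env G k \<noteq> None \<longrightarrow> ty DN N" using t_mc(5) by (auto simp: mc_env_def)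
    show "compat k (mc_env G) (mc_env D)" using compat_mc[OF t_mc(6)] .
    show "mc_env (senv k G D) = senv k (mc_env G) (mc_env D)" using senv_mc[OF t_mc(6)] by simp
  qed
  ultimately show ?case unfolding P(1) by (blast intro: tyI.t_mc)
qed

lemma subst_ty:
  assumes "ty G M" "substR k N M P" "cond (G k) DN D" "G k \<noteq> None \<longrightarrow> ty DN N" "compat k G D"
  shows "ty (senv k G D) P"
proof (rule ty_coind[where X=SX])
  show "SX (senv k G D) P" unfolding SX_def using assms by blast
next
  fix T P assume "SX T P"
  then obtain G M k N DN D where h: "ty G M" "substR k N M P" "cond (G k) DN D"
      "G k \<noteq> None \<longrightarrow> ty DN N" "compat k G D" "T = senv k G D" unfolding SX_def by blast
  show "tyI (\<lambda>T P. SX T P \<or> ty T P) T P"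
    unfolding h(6) by (rule subst_I[OF ty_tyI[OF h(1)] h(2-5)])
qed

lemma tyI_AppE: "tyI R G (App M N) \<Longrightarrow> \<exists>G1 G2. app_split G G1 G2 \<and> tyI R G1 M \<and> tyI R G2 N"
  by (erule tyI.cases) auto
lemma tyI_LamE: "tyI R G (Lam M) \<Longrightarrow> tyI R (push PL G) M"
  by (erule tyI.cases) auto
lemma tyI_LamIE: "tyI R G (LamI M) \<Longrightarrow> tyI R (push PH G) M \<or> tyI R (push PI G) M"
  by (erule tyI.cases) auto
lemma tyI_LamCE: "tyI R G (LamC M) \<Longrightarrow> tyI R (push PC G) M"
  by (erule tyI.cases) auto
lemma tyI_BoxIE: "tyI R G (BoxI M) \<Longrightarrow> (\<forall>y. G y \<noteq> Some PL) \<and> tyI R (mi_env G) M"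
  by (erule tyI.cases) auto
lemma tyI_BoxCE: "tyI R G (BoxC M) \<Longrightarrow> (\<forall>y. G y \<in> {None, Some PH, Some PC, Some PD}) \<and> R (mc_env G) M"
  by (erule tyI.cases) auto

definition env_pi :: "env \<Rightarrow> env \<Rightarrow> bool" where
  "env_pi G G' \<longleftrightarrow> (\<forall>y. G' y = G y \<or> (G y = Some PI \<and> G' y = Some PH))"

lemma env_pi_refl: "env_pi G G" unfolding env_pi_def by simp

lemma root_env:
  assumes "app_split G G1 G2"
  shows "compat 0 (push p G1) G2" "senv 0 (push p G1) G2 = G"
proof -
  show "compat 0 (push p G1) G2" unfolding compat_def push_def
  proof
    fix j
    have "asp (G j) (G1 j) (G2 j)" using assms by (simp add: app_split_pt)
    then show "cpt (case 0 + Suc j of 0 \<Rightarrow> Some p | Suc j \<Rightarrow> G1 j) (G2 j)"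
      by (rule asp_E; cases "G j" rule: optE) (auto simp: cpt_def)
  qed
  show "senv 0 (push p G1) G2 = G"
  proof (rule ext)
    fix j
    have "asp (G j) (G1 j) (G2 j)" using assms by (simp add: app_split_pt)
    then show "senv 0 (push p G1) G2 j = G j"
      by (rule asp_E; cases "G j" rule: optE) (auto simp: senv_def push_def mrg_def)
  qed
qed

lemma sr_basic:
  assumes "basic M M'" "tyI ty G M"
  shows "\<exists>G'. env_pi G G' \<and> ty G' M'"
  using assms(1)
proof cases
  case (b_lin N A)
  obtain G1 G2 where h: "app_split G G1 G2" "tyI ty G1 (Lam A)" "tyI ty G2 N"
    using tyI_AppE assms(2) b_lin(1) by blast
  have "ty (senv 0 (push PL G1) G2) M'"
    by (rule subst_ty[OF tyI_ty[OF tyI_LamE[OF h(2)]] b_lin(2), where DN=G2])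
      (auto simp: push_0 cond_def root_env[OF h(1)] tyI_ty[OF h(3)])
  then show ?thesis using root_env[OF h(1)] env_pi_refl by auto
next
  case (b_coi N A)
  obtain G1 G2 where h: "app_split G G1 G2" "tyI ty G1 (LamC A)" "tyI ty G2 (BoxC N)"
    using tyI_AppE assms(2) b_coi(1) by blast
  have nl: "nonlin G2" "ty (mc_env G2) N" using tyI_BoxCE[OF h(3)] unfolding nonlin_def by blast+
  have "ty (senv 0 (push PC G1) G2) M'"
    by (rule subst_ty[OF tyI_ty[OF tyI_LamCE[OF h(2)]] b_coi(2), where DN="mc_env G2"])
      (auto simp: push_0 cond_def root_env[OF h(1)] nl)
  then show ?thesis using root_env[OF h(1)] env_pi_refl by auto
next
  case (b_ind N A)
  obtain G1 G2 where h: "app_split G G1 G2" "tyI ty G1 (LamI A)" "tyI ty G2 (BoxI N)"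
    using tyI_AppE assms(2) b_ind(1) by blast
  have b: "\<forall>y. G2 y \<noteq> Some PL" "ty (mi_env G2) N" using tyI_BoxIE[OF h(3)] tyI_ty by blast+
  from tyI_LamIE[OF h(2)] show ?thesis
  proof
    assume l: "tyI ty (push PI G1) A"
    have "ty (senv 0 (push PI G1) G2) M'"
      by (rule subst_ty[OF tyI_ty[OF l] b_ind(2), where DN="mi_env G2"])
        (auto simp: push_0 cond_def root_env[OF h(1)] b)
    then show ?thesis using root_env[OF h(1)] env_pi_refl by auto
  next
    assume l: "tyI ty (push PH G1) A"
    define D where "D = (\<lambda>y. if G2 y = Some PI then Some PH else G2 y)"
    have le: "env_le (mi_env G2) D" unfolding env_le_def
    proof
      fix y
      show "D y = mi_env G2 y \<or> (mi_env G2 y \<in> {None, Some PL} \<and> D y = Some PH) \<or>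
         (mi_env G2 y = None \<and> D y \<in> {Some PC, Some PD})"
        using b(1)[rule_format, of y] by (cases "G2 y" rule: optE) (auto simp: D_def mi_env_def)
    qed
    have nD: "nonlin D" unfolding nonlin_def
    proof
      fix y show "D y \<in> {None, Some PH, Some PC, Some PD}"
        using b(1)[rule_format, of y] by (cases "G2 y" rule: optE) (auto simp: D_def)
    qed
    have cp: "compat 0 (push PH G1) D" unfolding compat_def push_def
    proof
      fix j
      have "asp (G j) (G1 j) (G2 j)" using h(1) by (simp add: app_split_pt)
      then show "cpt (case 0 + Suc j of 0 \<Rightarrow> Some PH | Suc j \<Rightarrow> G1 j) (D j)"
        by (rule asp_E; cases "G j" rule: optE) (auto simp: cpt_def D_def)
    qed
    have "ty (senv 0 (push PH G1) D) M'"
      by (rule subst_ty[OF tyI_ty[OF l] b_ind(2), where DN="D"])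
        (auto simp: push_0 cond_def nD cp weak[OF b(2) le])
    moreover have "env_pi G (senv 0 (push PH G1) D)" unfolding env_pi_def
    proof
      fix j
      have "asp (G j) (G1 j) (G2 j)" using h(1) by (simp add: app_split_pt)
      then show "senv 0 (push PH G1) D j = G j \<or> (G j = Some PI \<and> senv 0 (push PH G1) D j = Some PH)"
        by (rule asp_E; cases "G j" rule: optE) (auto simp: senv_def push_def mrg_def D_def)
    qed
    ultimately show ?thesis by blast
  qed
qed

inductive istep :: "trm \<Rightarrow> trm \<Rightarrow> bool" where
  is_basic: "basic M N \<Longrightarrow> istep M N"
| is_appL: "istep M M' \<Longrightarrow> istep (App M N) (App M' N)"
| is_appR: "istep N N' \<Longrightarrow> istep (App M N) (App M N')"
| is_lam: "istep M M' \<Longrightarrow> istep (Lam M) (Lam M')"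
| is_lamI: "istep M M' \<Longrightarrow> istep (LamI M) (LamI M')"
| is_lamC: "istep M M' \<Longrightarrow> istep (LamC M) (LamC M')"
| is_boxI: "istep M M' \<Longrightarrow> istep (BoxI M) (BoxI M')"

lemma istep_step: "istep M N \<Longrightarrow> step M N"
  by (induction rule: istep.induct) (auto intro: step.intros)

lemma isteps_steps: "istep\<^sup>*\<^sup>* M N \<Longrightarrow> step\<^sup>*\<^sup>* M N"
  by (induction rule: rtranclp_induct) (auto intro: rtranclp.rtrancl_into_rtrancl istep_step)

lemma push_decomp: "G 0 = Some p \<Longrightarrow> G = push p (\<lambda>j. G (Suc j))"
  by (rule ext) (auto simp: push_def split: nat.split)

lemma env_pi_Suc: "env_pi (push p G) G'' \<Longrightarrow> env_pi G (\<lambda>j. G'' (Suc j))"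
  unfolding env_pi_def push_def
proof
  fix j assume "\<forall>y. G'' y = (case y of 0 \<Rightarrow> Some p | Suc j \<Rightarrow> G j) \<or>
             (case y of 0 \<Rightarrow> Some p | Suc j \<Rightarrow> G j) = Some PI \<and> G'' y = Some PH"
  then have "G'' (Suc j) = (case Suc j of 0 \<Rightarrow> Some p | Suc j \<Rightarrow> G j) \<or>
             (case Suc j of 0 \<Rightarrow> Some p | Suc j \<Rightarrow> G j) = Some PI \<and> G'' (Suc j) = Some PH" by blast
  then show "G'' (Suc j) = G j \<or> G j = Some PI \<and> G'' (Suc j) = Some PH" by simp
qed

lemma env_pi_0: "env_pi (push p G) G'' \<Longrightarrow> G'' 0 = Some p \<or> (p = PI \<and> G'' 0 = Some PH)"
  unfolding env_pi_def push_def
proof -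
  assume "\<forall>y. G'' y = (case y of 0 \<Rightarrow> Some p | Suc j \<Rightarrow> G j) \<or>
             (case y of 0 \<Rightarrow> Some p | Suc j \<Rightarrow> G j) = Some PI \<and> G'' y = Some PH"
  then have "G'' 0 = (case 0 of 0 \<Rightarrow> Some p | Suc j \<Rightarrow> G j) \<or>
             (case 0 of 0 \<Rightarrow> Some p | Suc j \<Rightarrow> G j) = Some PI \<and> G'' 0 = Some PH" by blast
  then show "G'' 0 = Some p \<or> (p = PI \<and> G'' 0 = Some PH)" by simp
qed

lemma env_pi_push: "env_pi (push p G) G'' \<Longrightarrow> p \<noteq> PI \<Longrightarrow> G'' = push p (\<lambda>j. G'' (Suc j)) \<and> env_pi G (\<lambda>j. G'' (Suc j))"
  using env_pi_0[of p G G''] env_pi_Suc[of p G G''] push_decomp[of G'' p] by blast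

lemma env_pi_pushI: "env_pi (push PI G) G'' \<Longrightarrow> (G'' = push PI (\<lambda>j. G'' (Suc j)) \<or> G'' = push PH (\<lambda>j. G'' (Suc j))) \<and> env_pi G (\<lambda>j. G'' (Suc j))"
  using env_pi_0[of PI G G''] env_pi_Suc[of PI G G''] push_decomp[of G'' PI] push_decomp[of G'' PH] by blast

lemma env_pi_mi: "env_pi (mi_env G) G'' \<Longrightarrow> G'' = mi_env G"
proof (rule ext)
  fix y assume "env_pi (mi_env G) G''"
  then have "G'' y = mi_env G y \<or> (mi_env G y = Some PI \<and> G'' y = Some PH)" unfolding env_pi_def by blast
  moreover have "mi_env G y \<noteq> Some PI" unfolding mi_env_def by (cases "G y" rule: optE) auto
  ultimately show "G'' y = mi_env G y" by blast
qed

lemma sr_app: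
  assumes sp: "app_split G G1 G2" and pi: "env_pi G1 G1'" and t2: "tyI ty G2 N"
  shows "\<exists>G' G2'. env_pi G G' \<and> app_split G' G1' G2' \<and> tyI ty G2' N"
proof -
  define G' where "G' = (\<lambda>y. if G1' y \<noteq> G1 y then Some PH else G y)"
  define G2' where "G2' = (\<lambda>y. if G1' y \<noteq> G1 y then Some PH else G2 y)"
  have *: "\<And>y. asp (G y) (G1 y) (G2 y)" "\<And>y. G1' y = G1 y \<or> (G1 y = Some PI \<and> G1' y = Some PH)"
    using sp pi unfolding app_split_pt env_pi_def by blast+
  have "env_pi G G'" unfolding env_pi_def
  proof
    fix y show "G' y = G y \<or> G y = Some PI \<and> G' y = Some PH"
      by (rule asp_E[OF *(1)[of y]]) (use *(2)[of y] in \<open>auto simp: G'_def\<close>)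
  qed
  moreover have "app_split G' G1' G2'" unfolding app_split_pt
  proof
    fix y show "asp (G' y) (G1' y) (G2' y)"
      by (rule asp_E[OF *(1)[of y]]) (use *(2)[of y] in \<open>auto simp: G'_def G2'_def asp_def\<close>)
  qed
  moreover have "env_le G2 G2'" unfolding env_le_def
  proof
    fix y show "G2' y = G2 y \<or> G2 y \<in> {None, Some PL} \<and> G2' y = Some PH \<or> G2 y = None \<and> G2' y \<in> {Some PC, Some PD}"
      by (rule asp_E[OF *(1)[of y]]) (use *(2)[of y] in \<open>auto simp: G2'_def\<close>)
  qed
  then have "tyI ty G2' N" using weak tyI_ty[OF t2] ty_tyI by blast
  ultimately show ?thesis by blast
qed

lemma app_split_sym: "app_split G G1 G2 \<Longrightarrow> app_split G G2 G1"
  unfolding app_split_def by blast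

lemma sr_I:
  assumes "istep M M'" "tyI ty G M"
  shows "\<exists>G'. env_pi G G' \<and> tyI ty G' M'"
  using assms
proof (induction arbitrary: G rule: istep.induct)
  case (is_basic M N)
  then show ?case using sr_basic ty_tyI by blast
next
  case (is_appL M M' N)
  obtain G1 G2 where h: "app_split G G1 G2" "tyI ty G1 M" "tyI ty G2 N" using tyI_AppE[OF is_appL(3)] by blast
  obtain G1' where h1: "env_pi G1 G1'" "tyI ty G1' M'" using is_appL.IH[OF h(2)] by blast
  obtain G' G2' where "env_pi G G'" "app_split G' G1' G2'" "tyI ty G2' N" using sr_app[OF h(1) h1(1) h(3)] by blast
  then show ?case using h1 by (blast intro: tyI.t_app)
next
  case (is_appR N N' M)
  obtain G1 G2 where h: "app_split G G1 G2" "tyI ty G1 M" "tyI ty G2 N" using tyI_AppE[OF is_appR(3)] by blast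
  obtain G2' where h2: "env_pi G2 G2'" "tyI ty G2' N'" using is_appR.IH[OF h(3)] by blast
  obtain G' G1' where "env_pi G G'" "app_split G' G2' G1'" "tyI ty G1' M"
    using sr_app[OF app_split_sym[OF h(1)] h2(1) h(2)] by blast
  then show ?case using h2 by (blast intro: tyI.t_app app_split_sym)
next
  case (is_lam M M')
  obtain G'' where h: "env_pi (push PL G) G''" "tyI ty G'' M'" using is_lam.IH[OF tyI_LamE[OF is_lam(3)]] by blast
  have e: "G'' = push PL (\<lambda>j. G'' (Suc j))" "env_pi G (\<lambda>j. G'' (Suc j))" using env_pi_push[OF h(1)] by simp_all
  have "tyI ty (push PL (\<lambda>j. G'' (Suc j))) M'" by (subst e(1)[symmetric]) (rule h(2))
  then show ?case using e(2) by (blast intro: tyI.t_ll)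
next
  case (is_lamC M M')
  obtain G'' where h: "env_pi (push PC G) G''" "tyI ty G'' M'" using is_lamC.IH[OF tyI_LamCE[OF is_lamC(3)]] by blast
  have e: "G'' = push PC (\<lambda>j. G'' (Suc j))" "env_pi G (\<lambda>j. G'' (Suc j))" using env_pi_push[OF h(1)] by simp_all
  have "tyI ty (push PC (\<lambda>j. G'' (Suc j))) M'" by (subst e(1)[symmetric]) (rule h(2))
  then show ?case using e(2) by (blast intro: tyI.t_lc)
next
  case (is_lamI M M')
  from tyI_LamIE[OF is_lamI(3)] show ?case
  proof
    assume "tyI ty (push PH G) M"
    then obtain G'' where h: "env_pi (push PH G) G''" "tyI ty G'' M'" using is_lamI.IH by blast
    have e: "G'' = push PH (\<lambda>j. G'' (Suc j))" "env_pi G (\<lambda>j. G'' (Suc j))" using env_pi_push[OF h(1)] by simp_all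
    have "tyI ty (push PH (\<lambda>j. G'' (Suc j))) M'" by (subst e(1)[symmetric]) (rule h(2))
    then show ?case using e(2) by (blast intro: tyI.t_li1)
  next
    assume "tyI ty (push PI G) M"
    then obtain G'' where h: "env_pi (push PI G) G''" "tyI ty G'' M'" using is_lamI.IH by blast
    have e: "G'' = push PI (\<lambda>j. G'' (Suc j)) \<or> G'' = push PH (\<lambda>j. G'' (Suc j))" "env_pi G (\<lambda>j. G'' (Suc j))"
      using env_pi_pushI[OF h(1)] by simp_all
    from e(1) show ?case
    proof
      assume e1: "G'' = push PI (\<lambda>j. G'' (Suc j))"
      have "tyI ty (push PI (\<lambda>j. G'' (Suc j))) M'" by (subst e1[symmetric]) (rule h(2))
      then show ?case using e(2) by (blast intro: tyI.t_li2)
    next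
      assume e1: "G'' = push PH (\<lambda>j. G'' (Suc j))"
      have "tyI ty (push PH (\<lambda>j. G'' (Suc j))) M'" by (subst e1[symmetric]) (rule h(2))
      then show ?case using e(2) by (blast intro: tyI.t_li1)
    qed
  qed
next
  case (is_boxI M M')
  have b: "\<forall>y. G y \<noteq> Some PL" "tyI ty (mi_env G) M" using tyI_BoxIE[OF is_boxI(3)] by blast+
  obtain G'' where h: "env_pi (mi_env G) G''" "tyI ty G'' M'" using is_boxI.IH[OF b(2)] by blast
  then have "tyI ty (mi_env G) M'" using env_pi_mi by blast
  then show ?case using b(1) env_pi_refl by (blast intro: tyI.t_mi)
qed

inductive dm :: "trm \<Rightarrow> nat multiset \<Rightarrow> bool" where
  dm_var: "dm (Var i) {#0#}"
| dm_app: "dm a A \<Longrightarrow> dm b B \<Longrightarrow> dm (App a b) (add_mset 0 (A + B))"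
| dm_lam: "dm a A \<Longrightarrow> dm (Lam a) (add_mset 0 A)"
| dm_lamI: "dm a A \<Longrightarrow> dm (LamI a) (add_mset 0 A)"
| dm_lamC: "dm a A \<Longrightarrow> dm (LamC a) (add_mset 0 A)"
| dm_boxI: "dm a A \<Longrightarrow> dm (BoxI a) (add_mset 0 (image_mset Suc A))"
| dm_boxC: "dm (BoxC a) {#0#}"

inductive_cases dm_VarE: "dm (Var i) A"
inductive_cases dm_AppE: "dm (App a b) A"
inductive_cases dm_LamE: "dm (Lam a) A"
inductive_cases dm_LamIE: "dm (LamI a) A"
inductive_cases dm_LamCE: "dm (LamC a) A"
inductive_cases dm_BoxIE: "dm (BoxI a) A"
inductive_cases dm_BoxCE: "dm (BoxC a) A"

lemma dm_exists: "tyI R G M \<Longrightarrow> \<exists>A. dm M A"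
  by (induction rule: tyI.induct) (auto intro: dm.intros)

lemma dm_lift: "dm N B \<Longrightarrow> dm (lift c n N) B"
  by (induction arbitrary: c rule: dm.induct) (auto intro: dm.intros)

inductive nofree :: "nat \<Rightarrow> trm \<Rightarrow> bool" where
  "i \<noteq> k \<Longrightarrow> nofree k (Var i)"
| "nofree k a \<Longrightarrow> nofree k b \<Longrightarrow> nofree k (App a b)"
| "nofree (Suc k) a \<Longrightarrow> nofree k (Lam a)"
| "nofree (Suc k) a \<Longrightarrow> nofree k (LamI a)"
| "nofree (Suc k) a \<Longrightarrow> nofree k (LamC a)"
| "nofree k a \<Longrightarrow> nofree k (BoxI a)"
| "nofree k (BoxC a)"

inductive fr0 :: "nat \<Rightarrow> trm \<Rightarrow> nat \<Rightarrow> bool" where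
  "fr0 k (Var k) 1"
| "i \<noteq> k \<Longrightarrow> fr0 k (Var i) 0"
| "fr0 k a n \<Longrightarrow> fr0 k b m \<Longrightarrow> fr0 k (App a b) (n + m)"
| "fr0 (Suc k) a n \<Longrightarrow> fr0 k (Lam a) n"
| "fr0 (Suc k) a n \<Longrightarrow> fr0 k (LamI a) n"
| "fr0 (Suc k) a n \<Longrightarrow> fr0 k (LamC a) n"
| "nofree k a \<Longrightarrow> fr0 k (BoxI a) 0"
| "fr0 k (BoxC a) 0"

inductive fr1 :: "nat \<Rightarrow> trm \<Rightarrow> bool" where
  "fr1 k a \<Longrightarrow> nofree k b \<Longrightarrow> fr1 k (App a b)"
| "nofree k a \<Longrightarrow> fr1 k b \<Longrightarrow> fr1 k (App a b)"
| "fr1 (Suc k) a \<Longrightarrow> fr1 k (Lam a)"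
| "fr1 (Suc k) a \<Longrightarrow> fr1 k (LamI a)"
| "fr1 (Suc k) a \<Longrightarrow> fr1 k (LamC a)"
| "fr0 k a 1 \<Longrightarrow> fr1 k (BoxI a)"

lemma nofree_fr0: "nofree k M \<Longrightarrow> fr0 k M 0"
proof (induction rule: nofree.induct)
  case (2 k a b)
  then show ?case using fr0.intros(3)[of k a 0 b 0] by simp
qed (auto intro: fr0.intros)

lemma ty_nofree: "tyI R G M \<Longrightarrow> G k \<in> {None, Some PC} \<Longrightarrow> nofree k M"
proof (induction arbitrary: k rule: tyI.induct)
  case (t_var G x)
  then show ?case by (auto intro: nofree.intros)
next
  case (t_app G G1 G2 M N)
  have "asp (G k) (G1 k) (G2 k)" using t_app(1) by (simp add: app_split_pt)
  then have "G1 k = G k" "G2 k = G k" using t_app(6) by (auto simp: asp_def)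
  then show ?case using t_app by (auto intro: nofree.intros)
next
  case (t_mi G M)
  then show ?case by (auto intro: nofree.intros simp: mi_env_def)
qed (auto intro: nofree.intros simp: push_Suc)

lemma ty_fr0_PL: "tyI R G M \<Longrightarrow> G k = Some PL \<Longrightarrow> fr0 k M 1"
proof (induction arbitrary: k rule: tyI.induct)
  case (t_var G x)
  then have "x = k" by (cases "x = k") auto
  then show ?case using fr0.intros(1)[of k] by simp
next
  case (t_app G G1 G2 M N)
  have "asp (G k) (G1 k) (G2 k)" using t_app(1) by (simp add: app_split_pt)
  then show ?case
  proof (rule asp_E)
    assume "G1 k = G k" "G2 k = None"
    then have "fr0 k M 1" "fr0 k N 0" using t_app nofree_fr0 ty_nofree by auto
    then show ?case using fr0.intros(3)[of k M 1 N 0] by simp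
  next
    assume "G1 k = None" "G2 k = G k"
    then have "fr0 k M 0" "fr0 k N 1" using t_app nofree_fr0 ty_nofree by auto
    then show ?case using fr0.intros(3)[of k M 0 N 1] by simp
  next
    assume "G k \<notin> {Some PL, Some PI}" then show ?case using t_app by simp
  qed
next
  case (t_mi G M) then show ?case by auto
next
  case (t_mc G M) then show ?case using t_mc(1)[rule_format, of k] by simp
qed (auto intro: fr0.intros simp: push_Suc)

lemma ty_fr0_PH: "tyI R G M \<Longrightarrow> G k = Some PH \<Longrightarrow> \<exists>n. fr0 k M n"
proof (induction arbitrary: k rule: tyI.induct)
  case (t_var G x)
  then show ?case by (cases "x = k") (auto intro: fr0.intros)
next
  case (t_app G G1 G2 M N)
  have "asp (G k) (G1 k) (G2 k)" using t_app(1) by (simp add: app_split_pt)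
  then have "G1 k = G k" "G2 k = G k" using t_app(6) by (auto simp: asp_def)
  then have "\<exists>n. fr0 k M n" "\<exists>m. fr0 k N m" using t_app.IH t_app(6) by simp_all
  then obtain n m where "fr0 k M n" "fr0 k N m" by blast
  then show ?case by (blast intro: fr0.intros(3))
next
  case (t_mi G M)
  then have "nofree k M" using ty_nofree[OF t_mi(2), of k] by (simp add: mi_env_def)
  then show ?case by (auto intro: fr0.intros)
next
  case (t_ll G M)
  then obtain n where "fr0 (Suc k) M n" using push_Suc[of PL G k] by metis
  then show ?case by (blast intro: fr0.intros(4))
next
  case (t_li1 G M)
  then obtain n where "fr0 (Suc k) M n" using push_Suc[of PH G k] by metis
  then show ?case by (blast intro: fr0.intros(5))
next
  case (t_li2 G M)
  then obtain n where "fr0 (Suc k) M n" using push_Suc[of PI G k] by metis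
  then show ?case by (blast intro: fr0.intros(5))
next
  case (t_lc G M)
  then obtain n where "fr0 (Suc k) M n" using push_Suc[of PC G k] by metis
  then show ?case by (blast intro: fr0.intros(6))
next
  case (t_mc G M) then show ?case by (blast intro: fr0.intros(8))
qed

lemma ty_fr1: "tyI R G M \<Longrightarrow> G k = Some PI \<Longrightarrow> fr1 k M"
proof (induction arbitrary: k rule: tyI.induct)
  case (t_var G x)
  then show ?case by (cases "x = k") auto
next
  case (t_app G G1 G2 M N)
  have "asp (G k) (G1 k) (G2 k)" using t_app(1) by (simp add: app_split_pt)
  then show ?case
  proof (rule asp_E)
    assume "G1 k = G k" "G2 k = None"
    then show ?case using t_app ty_nofree by (auto intro: fr1.intros)
  next
    assume "G1 k = None" "G2 k = G k"
    then show ?case using t_app ty_nofree by (auto intro: fr1.intros)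
  next
    assume "G k \<notin> {Some PL, Some PI}" then show ?case using t_app by simp
  qed
next
  case (t_mi G M)
  then have "fr0 k M 1" using ty_fr0_PL[OF t_mi(2), of k] by (simp add: mi_env_def)
  then show ?case by (auto intro: fr1.intros)
next
  case (t_mc G M) then show ?case using t_mc(1)[rule_format, of k] by simp
qed (auto intro: fr1.intros simp: push_Suc)

lemma rep_plus: "replicate_mset m x + replicate_mset n x = replicate_mset (m + n) x"
  by (induction m) auto

lemma dm_nf: "nofree k M \<Longrightarrow> dm M A \<Longrightarrow> substR k N M P \<Longrightarrow> dm P A"
proof (induction arbitrary: A P rule: nofree.induct)
  case (1 i k)
  have "A = {#0#}" using 1(2) by (auto elim: dm_VarE)
  moreover have "\<exists>j. P = Var j" using sR_Var[OF 1(3)] 1(1) by simp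
  ultimately show ?case by (auto intro: dm_var)
next
  case (2 k a b)
  obtain P1 P2 where P: "P = App P1 P2" "substR k N a P1" "substR k N b P2" using sR_App[OF 2(6)] by blast
  obtain A1 A2 where A: "A = add_mset 0 (A1 + A2)" "dm a A1" "dm b A2" using 2(5) by (auto elim: dm_AppE)
  show ?case unfolding P(1) A(1) by (rule dm_app[OF 2(3)[OF A(2) P(2)] 2(4)[OF A(3) P(3)]])
next
  case (3 k a)
  obtain P1 where P: "P = Lam P1" "substR (Suc k) N a P1" using sR_Lam[OF 3(4)] by blast
  obtain A1 where A: "A = add_mset 0 A1" "dm a A1" using 3(3) by (auto elim: dm_LamE)
  show ?case unfolding P(1) A(1) by (rule dm_lam[OF 3(2)[OF A(2) P(2)]])
next
  case (4 k a)
  obtain P1 where P: "P = LamI P1" "substR (Suc k) N a P1" using sR_LamI[OF 4(4)] by blast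
  obtain A1 where A: "A = add_mset 0 A1" "dm a A1" using 4(3) by (auto elim: dm_LamIE)
  show ?case unfolding P(1) A(1) by (rule dm_lamI[OF 4(2)[OF A(2) P(2)]])
next
  case (5 k a)
  obtain P1 where P: "P = LamC P1" "substR (Suc k) N a P1" using sR_LamC[OF 5(4)] by blast
  obtain A1 where A: "A = add_mset 0 A1" "dm a A1" using 5(3) by (auto elim: dm_LamCE)
  show ?case unfolding P(1) A(1) by (rule dm_lamC[OF 5(2)[OF A(2) P(2)]])
next
  case (6 k a)
  obtain P1 where P: "P = BoxI P1" "substR k N a P1" using sR_BoxI[OF 6(4)] by blast
  obtain A1 where A: "A = add_mset 0 (image_mset Suc A1)" "dm a A1" using 6(3) by (auto elim: dm_BoxIE)
  show ?case unfolding P(1) A(1) by (rule dm_boxI[OF 6(2)[OF A(2) P(2)]])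
next
  case (7 k a)
  obtain P1 where P: "P = BoxC P1" using sR_BoxC[OF 7(2)] by blast
  have "A = {#0#}" using 7(1) by (auto elim: dm_BoxCE)
  then show ?case unfolding P(1) by (simp add: dm_boxC)
qed

lemma dm_fr0: "fr0 k M n \<Longrightarrow> dm M A \<Longrightarrow> dm N B \<Longrightarrow> substR k N M P \<Longrightarrow>
   \<exists>A0. A = A0 + repeat_mset n {#0#} \<and> dm P (A0 + repeat_mset n B)"
proof (induction arbitrary: A P rule: fr0.induct)
  case (1 k)
  from 1(1) have "A = {#0#}" by (auto elim: dm_VarE)
  moreover have "P = lift 0 k N" using sR_Var[OF 1(3)] by simp
  ultimately show ?case using dm_lift[OF 1(2)] by (intro exI[of _ "{#}"]) simp
next
  case (2 i k)
  then show ?case using sR_Var[OF 2(4)] by (auto elim: dm_VarE intro: dm.intros)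
next
  case (3 k a n b m)
  obtain P1 P2 where P: "P = App P1 P2" "substR k N a P1" "substR k N b P2" using sR_App[OF 3(7)] by blast
  obtain A1 A2 where A: "A = add_mset 0 (A1 + A2)" "dm a A1" "dm b A2" using 3(5) by (auto elim: dm_AppE)
  obtain A01 where h1: "A1 = A01 + repeat_mset n {#0#}" "dm P1 (A01 + repeat_mset n B)" using 3(3)[OF A(2) 3(6) P(2)] by blast
  obtain A02 where h2: "A2 = A02 + repeat_mset m {#0#}" "dm P2 (A02 + repeat_mset m B)" using 3(4)[OF A(3) 3(6) P(3)] by blast
  have "dm P (add_mset 0 ((A01 + repeat_mset n B) + (A02 + repeat_mset m B)))" using P(1) h1 h2 by (auto intro: dm.intros)
  then show ?case using A(1) h1(1) h2(1)
    by (intro exI[of _ "add_mset 0 (A01 + A02)"]) (simp add: repeat_mset_distrib ac_simps rep_plus)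
next
  case (4 k a n)
  obtain P1 where P: "P = Lam P1" "substR (Suc k) N a P1" using sR_Lam[OF 4(5)] by blast
  obtain A1 where A: "A = add_mset 0 A1" "dm a A1" using 4(3) by (auto elim: dm_LamE)
  obtain A01 where "A1 = A01 + repeat_mset n {#0#}" "dm P1 (A01 + repeat_mset n B)" using 4(2)[OF A(2) 4(4) P(2)] by blast
  then show ?case using A P by (intro exI[of _ "add_mset 0 A01"]) (auto intro: dm.intros)
next
  case (5 k a n)
  obtain P1 where P: "P = LamI P1" "substR (Suc k) N a P1" using sR_LamI[OF 5(5)] by blast
  obtain A1 where A: "A = add_mset 0 A1" "dm a A1" using 5(3) by (auto elim: dm_LamIE)
  obtain A01 where "A1 = A01 + repeat_mset n {#0#}" "dm P1 (A01 + repeat_mset n B)" using 5(2)[OF A(2) 5(4) P(2)] by blast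
  then show ?case using A P by (intro exI[of _ "add_mset 0 A01"]) (auto intro: dm.intros)
next
  case (6 k a n)
  obtain P1 where P: "P = LamC P1" "substR (Suc k) N a P1" using sR_LamC[OF 6(5)] by blast
  obtain A1 where A: "A = add_mset 0 A1" "dm a A1" using 6(3) by (auto elim: dm_LamCE)
  obtain A01 where "A1 = A01 + repeat_mset n {#0#}" "dm P1 (A01 + repeat_mset n B)" using 6(2)[OF A(2) 6(4) P(2)] by blast
  then show ?case using A P by (intro exI[of _ "add_mset 0 A01"]) (auto intro: dm.intros)
next
  case (7 k a)
  obtain P1 where P: "P = BoxI P1" "substR k N a P1" using sR_BoxI[OF 7(4)] by blast
  obtain A1 where A: "A = add_mset 0 (image_mset Suc A1)" "dm a A1" using 7(2) by (auto elim: dm_BoxIE)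
  have "dm P1 A1" using dm_nf[OF 7(1) A(2) P(2)] .
  then show ?case using A P by (auto intro: dm.intros)
next
  case (8 k a)
  obtain P1 where P: "P = BoxC P1" using sR_BoxC[OF 8(3)] by blast
  have "A = {#0#}" using 8(1) by (auto elim: dm_BoxCE)
  then show ?case unfolding P(1) by (intro exI[of _ A]) (simp add: dm_boxC)
qed

lemma dm_fr1: "fr1 k M \<Longrightarrow> dm M A \<Longrightarrow> dm N B \<Longrightarrow> substR k N M P \<Longrightarrow>
   \<exists>A0. A = add_mset 1 A0 \<and> dm P (A0 + image_mset Suc B)"
proof (induction arbitrary: A P rule: fr1.induct)
  case (1 k a b)
  obtain P1 P2 where P: "P = App P1 P2" "substR k N a P1" "substR k N b P2" using sR_App[OF 1(6)] by blast
  obtain A1 A2 where A: "A = add_mset 0 (A1 + A2)" "dm a A1" "dm b A2" using 1(4) by (auto elim: dm_AppE)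
  obtain A01 where h1: "A1 = add_mset 1 A01" "dm P1 (A01 + image_mset Suc B)" using 1(3)[OF A(2) 1(5) P(2)] by blast
  have "dm P2 A2" using dm_nf[OF 1(2) A(3) P(3)] .
  then have "dm P (add_mset 0 ((A01 + image_mset Suc B) + A2))" using P(1) h1 by (auto intro: dm.intros)
  then show ?case using A(1) h1(1) by (intro exI[of _ "add_mset 0 (A01 + A2)"]) (simp add: ac_simps)
next
  case (2 k a b)
  obtain P1 P2 where P: "P = App P1 P2" "substR k N a P1" "substR k N b P2" using sR_App[OF 2(6)] by blast
  obtain A1 A2 where A: "A = add_mset 0 (A1 + A2)" "dm a A1" "dm b A2" using 2(4) by (auto elim: dm_AppE)
  obtain A02 where h2: "A2 = add_mset 1 A02" "dm P2 (A02 + image_mset Suc B)" using 2(3)[OF A(3) 2(5) P(3)] by blast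
  have "dm P1 A1" using dm_nf[OF 2(1) A(2) P(2)] .
  then have "dm P (add_mset 0 (A1 + (A02 + image_mset Suc B)))" using P(1) h2 by (auto intro: dm.intros)
  then show ?case using A(1) h2(1) by (intro exI[of _ "add_mset 0 (A1 + A02)"]) (simp add: ac_simps)
next
  case (3 k a)
  obtain P1 where P: "P = Lam P1" "substR (Suc k) N a P1" using sR_Lam[OF 3(5)] by blast
  obtain A1 where A: "A = add_mset 0 A1" "dm a A1" using 3(3) by (auto elim: dm_LamE)
  obtain A01 where "A1 = add_mset 1 A01" "dm P1 (A01 + image_mset Suc B)" using 3(2)[OF A(2) 3(4) P(2)] by blast
  then show ?case using A P by (intro exI[of _ "add_mset 0 A01"]) (auto intro: dm.intros)
next
  case (4 k a)
  obtain P1 where P: "P = LamI P1" "substR (Suc k) N a P1" using sR_LamI[OF 4(5)] by blast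
  obtain A1 where A: "A = add_mset 0 A1" "dm a A1" using 4(3) by (auto elim: dm_LamIE)
  obtain A01 where "A1 = add_mset 1 A01" "dm P1 (A01 + image_mset Suc B)" using 4(2)[OF A(2) 4(4) P(2)] by blast
  then show ?case using A P by (intro exI[of _ "add_mset 0 A01"]) (auto intro: dm.intros)
next
  case (5 k a)
  obtain P1 where P: "P = LamC P1" "substR (Suc k) N a P1" using sR_LamC[OF 5(5)] by blast
  obtain A1 where A: "A = add_mset 0 A1" "dm a A1" using 5(3) by (auto elim: dm_LamCE)
  obtain A01 where "A1 = add_mset 1 A01" "dm P1 (A01 + image_mset Suc B)" using 5(2)[OF A(2) 5(4) P(2)] by blast
  then show ?case using A P by (intro exI[of _ "add_mset 0 A01"]) (auto intro: dm.intros)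
next
  case (6 k a)
  obtain P1 where P: "P = BoxI P1" "substR k N a P1" using sR_BoxI[OF 6(4)] by blast
  obtain A1 where A: "A = add_mset 0 (image_mset Suc A1)" "dm a A1" using 6(2) by (auto elim: dm_BoxIE)
  obtain A01 where h: "A1 = A01 + repeat_mset 1 {#0#}" "dm P1 (A01 + repeat_mset 1 B)"
    using dm_fr0[OF 6(1) A(2) 6(3) P(2)] by blast
  have h2: "dm P1 (A01 + B)" using h(2) by simp
  have "dm P (add_mset 0 (image_mset Suc (A01 + B)))" unfolding P(1) by (rule dm_boxI[OF h2])
  then show ?case using A(1) h(1) by (intro exI[of _ "add_mset 0 (image_mset Suc A01)"]) simp
qed

definition lt :: "nat multiset \<Rightarrow> nat multiset \<Rightarrow> bool" where
  "lt X Y \<longleftrightarrow> (X, Y) \<in> mult {(x, y::nat). x < y}"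

lemma trans_less_rel: "trans {(x, y::nat). x < y}"
  unfolding trans_def by auto

lemma lt_one_step: "J \<noteq> {#} \<Longrightarrow> \<forall>k\<in>#K. \<exists>j\<in>#J. k < j \<Longrightarrow> X = I + K \<Longrightarrow> Y = I + J \<Longrightarrow> lt X Y"
  unfolding lt_def using one_step_implies_mult[of J K "{(x, y::nat). x < y}" I] by auto

lemma lt_plus: "lt X Y \<Longrightarrow> lt (X + C) (Y + C)"
  unfolding lt_def using mult_cancel[OF trans_less_rel, of C X Y] by (auto simp: irrefl_on_def)

lemma lt_plus2: "lt X Y \<Longrightarrow> lt (C + X) (C + Y)"
  using lt_plus[of X Y C] by (simp add: ac_simps)

lemma lt_add: "lt X Y \<Longrightarrow> lt (add_mset x X) (add_mset x Y)"
  using lt_plus[of X Y "{#x#}"] by simp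

lemma lt_img: "lt X Y \<Longrightarrow> lt (image_mset Suc X) (image_mset Suc Y)"
proof -
  assume "lt X Y"
  then obtain I J K where h: "Y = I + J" "X = I + K" "J \<noteq> {#}" "\<forall>k\<in>#K. \<exists>j\<in>#J. (k, j) \<in> {(x, y::nat). x < y}"
    unfolding lt_def using mult_implies_one_step[OF trans_less_rel] by blast
  show ?thesis
  proof (rule lt_one_step[of "image_mset Suc J" "image_mset Suc K" _ "image_mset Suc I"])
    show "image_mset Suc J \<noteq> {#}" using h(3) by simp
    show "\<forall>k\<in>#image_mset Suc K. \<exists>j\<in>#image_mset Suc J. k < j" using h(4) by auto
  qed (auto simp: h)
qed

lemma in_repeat: "x \<in># repeat_mset n B \<Longrightarrow> x \<in># B"
  by (metis count_repeat_mset count_eq_zero_iff mult_zero_right)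

lemma dec_basic:
  assumes "basic M M'" "tyI R G M" "dm M A"
  shows "\<exists>A'. dm M' A' \<and> lt A' A"
  using assms(1)
proof cases
  case (b_lin N a)
  obtain G1 G2 where h: "app_split G G1 G2" "tyI R G1 (Lam a)" "tyI R G2 N"
    using tyI_AppE assms(2) b_lin(1) by blast
  have f: "fr0 0 a 1" using ty_fr0_PL[OF tyI_LamE[OF h(2)]] by (simp add: push_0)
  obtain A1 B where A: "A = add_mset 0 (A1 + B)" "dm (Lam a) A1" "dm N B" using assms(3) b_lin(1) by (auto elim: dm_AppE)
  obtain Aa where Aa: "A1 = add_mset 0 Aa" "dm a Aa" using A(2) by (auto elim: dm_LamE)
  obtain A0 where r: "Aa = A0 + repeat_mset 1 {#0#}" "dm M' (A0 + repeat_mset 1 B)"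
    using dm_fr0[OF f Aa(2) A(3) b_lin(2)] by blast
  have "lt (A0 + B) A"
    by (rule lt_one_step[of "{#0, 0, 0#}" "{#}" _ "A0 + B"]) (auto simp: A(1) Aa(1) r(1))
  then show ?thesis using r(2) by auto
next
  case (b_coi N a)
  obtain G1 G2 where h: "app_split G G1 G2" "tyI R G1 (LamC a)" "tyI R G2 (BoxC N)"
    using tyI_AppE assms(2) b_coi(1) by blast
  have f: "nofree 0 a" using ty_nofree[OF tyI_LamCE[OF h(2)]] by (simp add: push_0)
  obtain A1 B where A: "A = add_mset 0 (A1 + B)" "dm (LamC a) A1" "dm (BoxC N) B" using assms(3) b_coi(1) by (auto elim: dm_AppE)
  obtain Aa where Aa: "A1 = add_mset 0 Aa" "dm a Aa" using A(2) by (auto elim: dm_LamCE)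
  have B: "B = {#0#}" using A(3) by (auto elim: dm_BoxCE)
  have "dm M' Aa" using dm_nf[OF f Aa(2) b_coi(2)] .
  moreover have "lt Aa A"
    by (rule lt_one_step[of "{#0, 0, 0#}" "{#}" _ "Aa"]) (auto simp: A(1) Aa(1) B)
  ultimately show ?thesis by auto
next
  case (b_ind N a)
  obtain G1 G2 where h: "app_split G G1 G2" "tyI R G1 (LamI a)" "tyI R G2 (BoxI N)"
    using tyI_AppE assms(2) b_ind(1) by blast
  obtain A1 B2 where A: "A = add_mset 0 (A1 + B2)" "dm (LamI a) A1" "dm (BoxI N) B2" using assms(3) b_ind(1) by (auto elim: dm_AppE)
  obtain Aa where Aa: "A1 = add_mset 0 Aa" "dm a Aa" using A(2) by (auto elim: dm_LamIE)
  obtain B where B: "B2 = add_mset 0 (image_mset Suc B)" "dm N B" using A(3) by (auto elim: dm_BoxIE)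
  from tyI_LamIE[OF h(2)] show ?thesis
  proof
    assume l: "tyI R (push PH G1) a"
    obtain n where f: "fr0 0 a n" using ty_fr0_PH[OF l, of 0] by (auto simp: push_0)
    obtain A0 where r: "Aa = A0 + repeat_mset n {#0#}" "dm M' (A0 + repeat_mset n B)"
      using dm_fr0[OF f Aa(2) B(2) b_ind(2)] by blast
    have "lt (A0 + repeat_mset n B) A"
    proof (rule lt_one_step[of "{#0, 0, 0#} + repeat_mset n {#0#} + image_mset Suc B" "repeat_mset n B" _ "A0"])
      show "\<forall>k\<in>#repeat_mset n B. \<exists>j\<in>#{#0, 0, 0#} + repeat_mset n {#0#} + image_mset Suc B. k < j"
        using in_repeat by fastforce
    qed (auto simp: A(1) Aa(1) B(1) r(1) ac_simps)
    then show ?thesis using r(2) by auto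
  next
    assume l: "tyI R (push PI G1) a"
    have f: "fr1 0 a" using ty_fr1[OF l] by (simp add: push_0)
    obtain A0 where r: "Aa = add_mset 1 A0" "dm M' (A0 + image_mset Suc B)"
      using dm_fr1[OF f Aa(2) B(2) b_ind(2)] by blast
    have "lt (A0 + image_mset Suc B) A"
      by (rule lt_one_step[of "{#0, 0, 0, 1#}" "{#}" _ "A0 + image_mset Suc B"]) (auto simp: A(1) Aa(1) B(1) r(1))
    then show ?thesis using r(2) by auto
  qed
qed

lemma dec_I:
  assumes "istep M M'" "tyI R G M" "dm M A"
  shows "\<exists>A'. dm M' A' \<and> lt A' A"
  using assms
proof (induction arbitrary: G A rule: istep.induct)
  case (is_basic M N) then show ?case using dec_basic by blast
next
  case (is_appL M M' N)
  obtain G1 G2 where h: "tyI R G1 M" using tyI_AppE[OF is_appL(3)] by blast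
  obtain A1 B where A: "A = add_mset 0 (A1 + B)" "dm M A1" "dm N B" using is_appL(4) by (auto elim: dm_AppE)
  obtain A1' where "dm M' A1'" "lt A1' A1" using is_appL.IH[OF h A(2)] by blast
  then show ?case using A by (auto intro!: dm_app lt_add lt_plus)
next
  case (is_appR N N' M)
  obtain G1 G2 where h: "tyI R G2 N" using tyI_AppE[OF is_appR(3)] by blast
  obtain A1 B where A: "A = add_mset 0 (A1 + B)" "dm M A1" "dm N B" using is_appR(4) by (auto elim: dm_AppE)
  obtain B' where "dm N' B'" "lt B' B" using is_appR.IH[OF h A(3)] by blast
  then show ?case using A by (auto intro!: dm_app lt_add lt_plus2)
next
  case (is_lam M M')
  obtain A1 where A: "A = add_mset 0 A1" "dm M A1" using is_lam(4) by (auto elim: dm_LamE)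
  obtain A1' where "dm M' A1'" "lt A1' A1" using is_lam.IH[OF tyI_LamE[OF is_lam(3)] A(2)] by blast
  then show ?case using A by (auto intro!: dm_lam lt_add)
next
  case (is_lamC M M')
  obtain A1 where A: "A = add_mset 0 A1" "dm M A1" using is_lamC(4) by (auto elim: dm_LamCE)
  obtain A1' where "dm M' A1'" "lt A1' A1" using is_lamC.IH[OF tyI_LamCE[OF is_lamC(3)] A(2)] by blast
  then show ?case using A by (auto intro!: dm_lamC lt_add)
next
  case (is_lamI M M')
  obtain A1 where A: "A = add_mset 0 A1" "dm M A1" using is_lamI(4) by (auto elim: dm_LamIE)
  obtain G' where "tyI R G' M" using tyI_LamIE[OF is_lamI(3)] by blast
  then obtain A1' where "dm M' A1'" "lt A1' A1" using is_lamI.IH A(2) by blast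
  then show ?case using A by (auto intro!: dm_lamI lt_add)
next
  case (is_boxI M M')
  obtain A1 where A: "A = add_mset 0 (image_mset Suc A1)" "dm M A1" using is_boxI(4) by (auto elim: dm_BoxIE)
  obtain A1' where "dm M' A1'" "lt A1' A1" using is_boxI.IH[OF conjunct2[OF tyI_BoxIE[OF is_boxI(3)]] A(2)] by blast
  then show ?case using A by (auto intro!: dm_boxI lt_add lt_img)
qed

primcorec sub :: "nat \<Rightarrow> trm \<Rightarrow> trm \<Rightarrow> trm" where
  "sub k N M = (case M of
      Var i \<Rightarrow> (if i = k then lift 0 k N else if k < i then Var (i - 1) else Var i)
    | App a b \<Rightarrow> App (sub k N a) (sub k N b)
    | Lam a \<Rightarrow> Lam (sub (Suc k) N a)
    | LamI a \<Rightarrow> LamI (sub (Suc k) N a)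
    | LamC a \<Rightarrow> LamC (sub (Suc k) N a)
    | BoxI a \<Rightarrow> BoxI (sub k N a)
    | BoxC a \<Rightarrow> BoxC (sub k N a))"

lemma sub_simps[simp]:
  "sub k N (Var i) = (if i = k then lift 0 k N else if k < i then Var (i - 1) else Var i)"
  "sub k N (App a b) = App (sub k N a) (sub k N b)"
  "sub k N (Lam a) = Lam (sub (Suc k) N a)"
  "sub k N (LamI a) = LamI (sub (Suc k) N a)"
  "sub k N (LamC a) = LamC (sub (Suc k) N a)"
  "sub k N (BoxI a) = BoxI (sub k N a)"
  "sub k N (BoxC a) = BoxC (sub k N a)"
  by (subst sub.code; simp)+

lemma substR_sub: "substR k N M (sub k N M)"
proof (coinduction arbitrary: k M rule: substR.coinduct)
  case substR
  show ?case by (cases M) auto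
qed

lemma env_pi_trans: assumes "env_pi G G'" "env_pi G' G''" shows "env_pi G G''"
  unfolding env_pi_def
proof
  fix y
  have a: "G' y = G y \<or> (G y = Some PI \<and> G' y = Some PH)" using assms(1) unfolding env_pi_def by blast
  have b: "G'' y = G' y \<or> (G' y = Some PI \<and> G'' y = Some PH)" using assms(2) unfolding env_pi_def by blast
  show "G'' y = G y \<or> (G y = Some PI \<and> G'' y = Some PH)" using a b by auto
qed

lemma env_pi_dom: "env_pi G G' \<Longrightarrow> dom G' = dom G"
  unfolding env_pi_def dom_def by (metis option.distinct(1))

lemma sr_star: "istep\<^sup>*\<^sup>* M P \<Longrightarrow> ty G M \<Longrightarrow> \<exists>G'. env_pi G G' \<and> ty G' P"
proof (induction rule: rtranclp_induct)
  case base then show ?case using env_pi_refl by blast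
next
  case (step y z)
  then obtain G' where "env_pi G G'" "ty G' y" by blast
  moreover obtain G'' where "env_pi G' G''" "tyI ty G'' z" using sr_I[OF step(2) ty_tyI[OF \<open>ty G' y\<close>]] by blast
  ultimately show ?case using env_pi_trans tyI_ty by blast
qed

lemma nf_exists:
  "dm M A \<Longrightarrow> ty G M \<Longrightarrow> \<exists>P. istep\<^sup>*\<^sup>* M P \<and> (\<forall>Q. \<not> istep P Q)"
proof (induction A arbitrary: M G rule: wf_induct[OF wf_mult[OF wf_less]])
  case (1 A)
  show ?case
  proof (cases "\<exists>Q. istep M Q")
    case False then show ?thesis by blast
  next
    case True
    then obtain M' where st: "istep M M'" by blast
    obtain G' where "env_pi G G'" "tyI ty G' M'" using sr_I[OF st ty_tyI[OF 1(3)]] by blast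
    moreover obtain A' where "dm M' A'" "lt A' A" using dec_I[OF st ty_tyI[OF 1(3)] 1(2)] by blast
    ultimately obtain P where "istep\<^sup>*\<^sup>* M' P" "\<forall>Q. \<not> istep P Q"
      using 1(1) tyI_ty unfolding lt_def by blast
    then show ?thesis using st by (meson converse_rtranclp_into_rtranclp)
  qed
qed

definition red :: "trm \<Rightarrow> trm" where
  "red M = (SOME P. istep\<^sup>*\<^sup>* M P \<and> (\<forall>Q. \<not> istep P Q))"

lemma red_prop: assumes "ty G M" shows "istep\<^sup>*\<^sup>* M (red M) \<and> (\<forall>Q. \<not> istep (red M) Q)"
proof -
  obtain A where "dm M A" using dm_exists[OF ty_tyI[OF assms]] by blast
  from nf_exists[OF this assms] show ?thesis unfolding red_def by (rule someI_ex)
qed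

lemma red_ty: assumes "ty G M" shows "\<exists>G'. env_pi G G' \<and> ty G' (red M)"
  using sr_star[OF conjunct1[OF red_prop[OF assms]] assms] .

lemma env_pi_noPI: assumes "\<forall>y. G y \<noteq> Some PI" "env_pi G G'" shows "G' = G"
proof (rule ext)
  fix y
  have a: "G' y = G y \<or> (G y = Some PI \<and> G' y = Some PH)" using assms(2) unfolding env_pi_def by blast
  then show "G' y = G y" using assms(1) by blast
qed

lemma mc_noPI: "G y \<in> {None, Some PH, Some PC, Some PD} \<Longrightarrow> mc_env G y \<noteq> Some PI"
  unfolding mc_env_def by (cases "G y" rule: optE) auto

primcorec nfc :: "trm \<Rightarrow> trm" where
  "nfc t = (case t of
      Var i \<Rightarrow> Var i
    | App a b \<Rightarrow> App (nfc a) (nfc b)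
    | Lam a \<Rightarrow> Lam (nfc a)
    | LamI a \<Rightarrow> LamI (nfc a)
    | LamC a \<Rightarrow> LamC (nfc a)
    | BoxI a \<Rightarrow> BoxI (nfc a)
    | BoxC a \<Rightarrow> BoxC (nfc (red a)))"

lemma nfc_simps[simp]:
  "nfc (Var i) = Var i"
  "nfc (App a b) = App (nfc a) (nfc b)"
  "nfc (Lam a) = Lam (nfc a)"
  "nfc (LamI a) = LamI (nfc a)"
  "nfc (LamC a) = LamC (nfc a)"
  "nfc (BoxI a) = BoxI (nfc a)"
  "nfc (BoxC a) = BoxC (nfc (red a))"
  by (subst nfc.code; simp)+

lemma fin_push: "finite (dom G) \<Longrightarrow> finite (dom (push p G))"
proof -
  assume "finite (dom G)"
  moreover have "dom (push p G) \<subseteq> insert 0 (Suc ` dom G)"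
  proof
    fix x assume x: "x \<in> dom (push p G)"
    show "x \<in> insert 0 (Suc ` dom G)"
    proof (cases x)
      case (Suc j) then show ?thesis using x by (auto simp: push_def)
    qed simp
  qed
  ultimately show ?thesis by (meson finite_imageI finite_insert finite_subset)
qed

lemma fin_split: "app_split G G1 G2 \<Longrightarrow> finite (dom G) \<Longrightarrow> finite (dom G1) \<and> finite (dom G2)"
proof -
  assume a: "app_split G G1 G2" "finite (dom G)"
  have "dom G1 \<subseteq> dom G" "dom G2 \<subseteq> dom G"
    using a(1) unfolding app_split_def dom_def by force+
  then show ?thesis using a(2) finite_subset by blast
qed

lemma fin_mi: "finite (dom G) \<Longrightarrow> finite (dom (mi_env G))"
proof -
  assume "finite (dom G)"
  moreover have "dom (mi_env G) \<subseteq> dom G" unfolding mi_env_def dom_def by (auto split: option.splits)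
  ultimately show ?thesis using finite_subset by blast
qed

lemma fin_mc: "finite (dom G) \<Longrightarrow> finite (dom (mc_env G))"
proof -
  assume "finite (dom G)"
  moreover have "dom (mc_env G) \<subseteq> dom G" unfolding mc_env_def dom_def by (auto split: option.splits)
  ultimately show ?thesis using finite_subset by blast
qed

definition XI :: "trm \<Rightarrow> trm \<Rightarrow> bool" where
  "XI a b \<longleftrightarrow> is_term a \<and> b = nfc (red a)"

lemma leads_nfc: "tyI ty G P \<Longrightarrow> finite (dom G) \<Longrightarrow> leadsI (\<lambda>a b. XI a b \<or> infred a b) P (nfc P)"
proof (induction rule: tyI.induct)
  case (t_var G x) then show ?case by (simp add: leadsI.l_var)
next
  case (t_app G G1 G2 M N) then show ?case using fin_split by (simp add: leadsI.l_app)
next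
  case (t_ll G M) then show ?case using fin_push by (simp add: leadsI.l_lam)
next
  case (t_li1 G M) then show ?case using fin_push by (simp add: leadsI.l_lamI)
next
  case (t_li2 G M) then show ?case using fin_push by (simp add: leadsI.l_lamI)
next
  case (t_lc G M) then show ?case using fin_push by (simp add: leadsI.l_lamC)
next
  case (t_mi G M) then show ?case using fin_mi by (simp add: leadsI.l_boxI)
next
  case (t_mc G M)
  have "is_term M" unfolding is_term_def using t_mc(2) fin_mc[OF t_mc(3)] by blast
  then show ?case by (simp add: leadsI.l_boxC XI_def)
qed

lemma infred_nfc: assumes "is_term M" shows "infred M (nfc (red M))"
proof -
  have "XI M (nfc (red M))" using assms by (simp add: XI_def)
  then show ?thesis
  proof (rule infred.coinduct[of XI])
    fix M L assume "XI M L"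
    then obtain G where G: "finite (dom G)" "ty G M" "L = nfc (red M)" unfolding XI_def is_term_def by blast
    obtain G' where G': "env_pi G G'" "ty G' (red M)" using red_ty[OF G(2)] by blast
    have "leadsI (\<lambda>a b. XI a b \<or> infred a b) (red M) (nfc (red M))"
      using leads_nfc[OF ty_tyI[OF G'(2)]] env_pi_dom[OF G'(1)] G(1) by simp
    moreover have "step\<^sup>*\<^sup>* M (red M)" using isteps_steps red_prop[OF G(2)] by blast
    ultimately show "\<exists>M' N L'. M = M' \<and> L = L' \<and> step\<^sup>*\<^sup>* M' N \<and> leadsI (\<lambda>a b. XI a b \<or> infred a b) N L'"
      using G(3) by blast
  qed
qed

definition SN :: "trm \<Rightarrow> bool" where
  "SN P \<longleftrightarrow> (\<exists>G. finite (dom G) \<and> ty G P) \<and> (\<forall>Q. \<not> istep P Q)"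

lemma SN_red: "is_term c \<Longrightarrow> SN (red c)"
proof -
  assume "is_term c"
  then obtain G where G: "finite (dom G)" "ty G c" unfolding is_term_def by blast
  obtain G' where G': "env_pi G G'" "ty G' (red c)" using red_ty[OF G(2)] by blast
  have "finite (dom G')" using env_pi_dom[OF G'(1)] G(1) by simp
  then show ?thesis unfolding SN_def using red_prop[OF G(2)] G'(2) by blast
qed

lemma nfc_Var: "nfc P = Var i \<Longrightarrow> P = Var i"
  by (cases P) auto
lemma nfc_App: "nfc P = App a b \<Longrightarrow> \<exists>x y. P = App x y \<and> a = nfc x \<and> b = nfc y"
  by (cases P) auto
lemma nfc_Lam: "nfc P = Lam a \<Longrightarrow> \<exists>x. P = Lam x \<and> a = nfc x"
  by (cases P) auto
lemma nfc_LamI: "nfc P = LamI a \<Longrightarrow> \<exists>x. P = LamI x \<and> a = nfc x"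
  by (cases P) auto
lemma nfc_LamC: "nfc P = LamC a \<Longrightarrow> \<exists>x. P = LamC x \<and> a = nfc x"
  by (cases P) auto
lemma nfc_BoxI: "nfc P = BoxI a \<Longrightarrow> \<exists>x. P = BoxI x \<and> a = nfc x"
  by (cases P) auto
lemma nfc_BoxC: "nfc P = BoxC a \<Longrightarrow> \<exists>x. P = BoxC x \<and> a = nfc (red x)"
  by (cases P) auto

lemma SN_App: "SN (App a b) \<Longrightarrow> SN a \<and> SN b"
  unfolding SN_def using tyI_AppE[OF ty_tyI] fin_split tyI_ty
  by (meson istep.is_appL istep.is_appR)

lemma SN_Lam: "SN (Lam a) \<Longrightarrow> SN a"
  unfolding SN_def using tyI_LamE[OF ty_tyI] fin_push tyI_ty istep.is_lam by meson
lemma SN_LamC: "SN (LamC a) \<Longrightarrow> SN a"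
  unfolding SN_def using tyI_LamCE[OF ty_tyI] fin_push tyI_ty istep.is_lamC by meson
lemma SN_LamI: "SN (LamI a) \<Longrightarrow> SN a"
  unfolding SN_def using tyI_LamIE[OF ty_tyI] fin_push tyI_ty istep.is_lamI by meson
lemma SN_BoxI: "SN (BoxI a) \<Longrightarrow> SN a"
  unfolding SN_def using tyI_BoxIE[OF ty_tyI] fin_mi tyI_ty istep.is_boxI by meson
lemma SN_BoxC: "SN (BoxC a) \<Longrightarrow> is_term a"
  unfolding SN_def is_term_def using tyI_BoxCE[OF ty_tyI] fin_mc by meson

lemma nfc_normal: "step Q Q' \<Longrightarrow> Q = nfc P \<Longrightarrow> SN P \<Longrightarrow> False"
proof (induction arbitrary: P rule: step.induct)
  case (st_basic M N)
  from st_basic(1) show ?case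
  proof cases
    case (b_lin N1 M1)
    obtain x y where "P = App x y" "Lam M1 = nfc x" using nfc_App st_basic(2) b_lin(1) by metis
    moreover then obtain z where "x = Lam z" using nfc_Lam by metis
    ultimately have "istep P (sub 0 y z)" using istep.is_basic[OF basic.b_lin[OF substR_sub]] by simp
    then show False using st_basic(3) unfolding SN_def by blast
  next
    case (b_ind N1 M1)
    obtain x y where xy: "P = App x y" "LamI M1 = nfc x" "BoxI N1 = nfc y" using nfc_App st_basic(2) b_ind(1) by metis
    moreover obtain z where "x = LamI z" using nfc_LamI xy(2) by metis
    moreover obtain w where "y = BoxI w" using nfc_BoxI xy(3) by metis
    ultimately have "istep P (sub 0 w z)" using istep.is_basic[OF basic.b_ind[OF substR_sub]] by simp
    then show False using st_basic(3) unfolding SN_def by blast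
  next
    case (b_coi N1 M1)
    obtain x y where xy: "P = App x y" "LamC M1 = nfc x" "BoxC N1 = nfc y" using nfc_App st_basic(2) b_coi(1) by metis
    moreover obtain z where "x = LamC z" using nfc_LamC xy(2) by metis
    moreover obtain w where "y = BoxC w" using nfc_BoxC xy(3) by metis
    ultimately have "istep P (sub 0 w z)" using istep.is_basic[OF basic.b_coi[OF substR_sub]] by simp
    then show False using st_basic(3) unfolding SN_def by blast
  qed
next
  case (st_appL M M' N)
  obtain x y where "P = App x y" "M = nfc x" using nfc_App st_appL(3) by metis
  then show ?case using st_appL SN_App by blast
next
  case (st_appR N N' M)
  obtain x y where "P = App x y" "N = nfc y" using nfc_App st_appR(3) by metis
  then show ?case using st_appR SN_App by blast
next
  case (st_lam M M')
  obtain x where "P = Lam x" "M = nfc x" using nfc_Lam st_lam(3) by metis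
  then show ?case using st_lam SN_Lam by blast
next
  case (st_lamI M M')
  obtain x where "P = LamI x" "M = nfc x" using nfc_LamI st_lamI(3) by metis
  then show ?case using st_lamI SN_LamI by blast
next
  case (st_lamC M M')
  obtain x where "P = LamC x" "M = nfc x" using nfc_LamC st_lamC(3) by metis
  then show ?case using st_lamC SN_LamC by blast
next
  case (st_boxI M M')
  obtain x where "P = BoxI x" "M = nfc x" using nfc_BoxI st_boxI(3) by metis
  then show ?case using st_boxI SN_BoxI by blast
next
  case (st_boxC M M')
  obtain x where "P = BoxC x" "M = nfc (red x)" using nfc_BoxC st_boxC(3) by metis
  then show ?case using st_boxC SN_BoxC SN_red by blast
qed

definition XT :: "env \<Rightarrow> trm \<Rightarrow> bool" where
  "XT G Q \<longleftrightarrow> (\<exists>P. Q = nfc P \<and> ty G P \<and> finite (dom G) \<and> (\<forall>Q. \<not> istep P Q))"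

lemma ty_nfc_I: "tyI ty G P \<Longrightarrow> finite (dom G) \<Longrightarrow> (\<forall>Q. \<not> istep P Q) \<Longrightarrow> tyI (\<lambda>G Q. XT G Q \<or> ty G Q) G (nfc P)"
proof (induction rule: tyI.induct)
  case (t_var G x) then show ?case by (simp add: tyI.t_var)
next
  case (t_app G G1 G2 M N)
  then show ?case using fin_split[OF t_app(1,6)] by (auto intro!: tyI.t_app intro: istep.intros)
next
  case (t_ll G M) then show ?case using fin_push by (auto intro!: tyI.t_ll intro: istep.intros)
next
  case (t_li1 G M) then show ?case using fin_push by (auto intro!: tyI.t_li1 intro: istep.intros)
next
  case (t_li2 G M) then show ?case using fin_push by (auto intro!: tyI.t_li2 intro: istep.intros)
next
  case (t_lc G M) then show ?case using fin_push by (auto intro!: tyI.t_lc intro: istep.intros)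
next
  case (t_mi G M) then show ?case using fin_mi by (auto intro!: tyI.t_mi intro: istep.intros)
next
  case (t_mc G M)
  obtain G' where G': "env_pi (mc_env G) G'" "ty G' (red M)" using red_ty[OF t_mc(2)] by blast
  have "\<forall>y. mc_env G y \<noteq> Some PI" using t_mc(1) mc_noPI by blast
  then have "G' = mc_env G" using env_pi_noPI[OF _ G'(1)] by blast
  then have "XT (mc_env G) (nfc (red M))" unfolding XT_def
    using G'(2) fin_mc[OF t_mc(3)] red_prop[OF t_mc(2)] by blast
  then show ?case using t_mc(1) by (simp add: tyI.t_mc)
qed

lemma ty_nfc: assumes "ty G P" "finite (dom G)" "\<forall>Q. \<not> istep P Q" shows "ty G (nfc P)"
proof (rule ty_coind[where X=XT])
  show "XT G (nfc P)" unfolding XT_def using assms by blast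
next
  fix G Q assume "XT G Q"
  then obtain P where h: "Q = nfc P" "ty G P" "finite (dom G)" "\<forall>Q. \<not> istep P Q" unfolding XT_def by blast
  show "tyI (\<lambda>G Q. XT G Q \<or> ty G Q) G Q" unfolding h(1) by (rule ty_nfc_I[OF ty_tyI[OF h(2)] h(3,4)])
qed

theorem mainTheorem15:
  assumes "is_term M"
  shows "\<exists>N. normal_form N \<and> is_term N \<and> infred M N"
proof -
  obtain G where G: "finite (dom G)" "ty G M" using assms unfolding is_term_def by blast
  obtain G' where G': "env_pi G G'" "ty G' (red M)" using red_ty[OF G(2)] by blast
  have fin: "finite (dom G')" using env_pi_dom[OF G'(1)] G(1) by simp
  have nr: "\<forall>Q. \<not> istep (red M) Q" using red_prop[OF G(2)] by blast
  have "is_term (nfc (red M))" unfolding is_term_def using ty_nfc[OF G'(2) fin nr] fin by blast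
  moreover have "normal_form (nfc (red M))"
    unfolding normal_form_def using nfc_normal SN_def G'(2) fin nr by blast
  moreover have "infred M (nfc (red M))" using infred_nfc[OF assms] .
  ultimately show ?thesis by blast
qed

end
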